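(* Let $G=(G_1,\dots,G_n)\in Y$. Then for almost every $x\in N$, $$\tilde Z(G)(x)=\sum_{k=1}^n\int_{(a_k,+\infty)}q_k(\lambda)G_k(\lambda)F^{-,k}_\lambda(x)\,d\lambda.$$
   Context: Fix an integer $n\ge 2$, constants $c_1,\dots,c_n>0$ and $0\le a_1\le\dots\le a_n<\infty$. Let $N_1,\dots,N_n$ be $n$ disjoint copies of $(0,\infty)$ and $N$ the star-shaped network obtained from $\overline{N_1},\dots,\overline{N_n}$ by identifying their endpoints $0$; functions on $N$ are $n$-tuples of functions on the $N_k$, and $\int_N g\,dx:=\sum_k\int_{N_k}g_k\,dx$. $H=L^2(N)=\prod_kL^2(N_k)$. Complex square root: $\sqrt{re^{i\phi}}=\sqrt re^{i\phi/2}$, $r\ge0$, $\phi\in[-\pi,\pi)$. For $\lambda\in\mathbb C$: $\xi_k(\lambda)=\sqrt{(\lambda-a_k)/c_k}$, $s_k(\lambda)=-\sum_{l\ne k}c_l\xi_l(\lambda)/(c_k\xi_k(\lambda))$. $F^{-,j}_\lambda:N\to\mathbb C$ is given for $x\in\overline{N_k}$ by $F^{-,j}_\lambda(x)=\cos(\xi_j(\lambda)x)-is_j(\lambda)\sin(\xi_j(\lambda)x)$ if $k=j$ and $\exp(-i\xi_k(\lambda)x)$ if $k\ne j$. For real $\lambda$, $w(\lambda):=-i\sum_jc_j\xi_j(\lambda)$, $q_l(\lambda)=0$ if $\lambda<a_l$ and $q_l(\lambda)=c_l\xi_l(\lambda)/(\pi|w(\lambda)|^2)$ if $\lambda>a_l$.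 $L^2_q:=\prod_{k=1}^nL^2((a_k,\infty),q_k\,d\lambda)$ with $(F,G)_q=\sum_k\int_{a_k}^\infty q_kF_k\overline{G_k}\,d\lambda$. Fix $\chi\in C^\infty(\mathbb R)$ with $\chi=0$ on $(-\infty,a_n+1)$, $\chi=1$ on $(a_n+2,\infty)$; $X$ is the (dense) set of $(G_1,\dots,G_n)\in L^2_q$ with $G_k\in C^\infty([a_k,\infty))$ and $\chi G_k$ (extended by $0$) in $\mathcal S(\mathbb R)$. For $G\in X$, $Z(G)(x)=\sum_k\int_{a_k}^\infty q_kG_kF^{-,k}_\lambda(x)\,d\lambda$; $\tilde Z:L^2_q\to H$ denotes the unique bounded extension of $Z$ from $X$ to $L^2_q$. $Y$ is the set of $(G_1,\dots,G_n)\in L^2_q$ such that each $G_j$ has compact support and $\mathrm{supp}(G_j)\cap\{a_1,\dots,a_n\}=\emptyset$. *)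

theory Defs
  imports "HOL-Analysis.Analysis"
begin

text \<open>Branch of the square root from the paper: argument taken in [-pi, pi).
  It agrees with csqrt except on the negative real axis, where it gives -i sqrt|z|.\<close>
definition psqrt :: "complex \<Rightarrow> complex" where
  "psqrt z = (if Im z = 0 \<and> Re z < 0 then - \<i> * complex_of_real (sqrt (- Re z)) else csqrt z)"

text \<open>Indices k range over {1..n}; a point x of the edge N_k is represented by (k, x), x > 0.
  Functions on N (elements of H) and elements of L2_q are represented as
  nat => real => complex.\<close>

definition xi :: "(nat \<Rightarrow> real) \<Rightarrow> (nat \<Rightarrow> real) \<Rightarrow> nat \<Rightarrow> complex \<Rightarrow> complex" where
  "xi c a k lam = psqrt ((lam - complex_of_real (a k)) / complex_of_real (c k))"

definition s_coef :: "nat \<Rightarrow> (nat \<Rightarrow> real) \<Rightarrow> (nat \<Rightarrow> real) \<Rightarrow> nat \<Rightarrow> complex \<Rightarrow> complex" where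
  "s_coef n c a k lam =
     - (\<Sum>l\<in>{1..n} - {k}. complex_of_real (c l) * xi c a l lam)
       / (complex_of_real (c k) * xi c a k lam)"

text \<open>Fminus n c a j lam k x = F^{-,j}_lam evaluated at the point x of edge k.\<close>
definition Fminus :: "nat \<Rightarrow> (nat \<Rightarrow> real) \<Rightarrow> (nat \<Rightarrow> real) \<Rightarrow> nat \<Rightarrow> complex \<Rightarrow> nat \<Rightarrow> real \<Rightarrow> complex" where
  "Fminus n c a j lam k x =
     (if k = j then cos (xi c a j lam * complex_of_real x)
                     - \<i> * s_coef n c a j lam * sin (xi c a j lam * complex_of_real x)
      else exp (- \<i> * xi c a k lam * complex_of_real x))"

definition wfun :: "nat \<Rightarrow> (nat \<Rightarrow> real) \<Rightarrow> (nat \<Rightarrow> real) \<Rightarrow> real \<Rightarrow> complex" where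
  "wfun n c a lam = - \<i> * (\<Sum>j\<in>{1..n}. complex_of_real (c j) * xi c a j (complex_of_real lam))"

text \<open>q_l; for lam > a_l the value c_l xi_l(lam)/(pi |w|^2) is real (xi_l(lam) > 0), we take Re.
  The value at lam = a_l (a null set) is not specified in the paper; we put 0.\<close>
definition qfun :: "nat \<Rightarrow> (nat \<Rightarrow> real) \<Rightarrow> (nat \<Rightarrow> real) \<Rightarrow> nat \<Rightarrow> real \<Rightarrow> real" where
  "qfun n c a l lam =
     (if lam > a l then c l * Re (xi c a l (complex_of_real lam)) / (pi * (cmod (wfun n c a lam))\<^sup>2)
      else 0)"

definition in_L2q :: "nat \<Rightarrow> (nat \<Rightarrow> real) \<Rightarrow> (nat \<Rightarrow> real) \<Rightarrow> (nat \<Rightarrow> real \<Rightarrow> complex) \<Rightarrow> bool" where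
  "in_L2q n c a G \<longleftrightarrow> (\<forall>k\<in>{1..n}.
      set_borel_measurable lborel {a k<..} (G k) \<and>
      set_integrable lborel {a k<..} (\<lambda>lam. qfun n c a k lam * (cmod (G k lam))\<^sup>2))"

definition norm_L2q :: "nat \<Rightarrow> (nat \<Rightarrow> real) \<Rightarrow> (nat \<Rightarrow> real) \<Rightarrow> (nat \<Rightarrow> real \<Rightarrow> complex) \<Rightarrow> real" where
  "norm_L2q n c a G = sqrt (\<Sum>k\<in>{1..n}.
      set_lebesgue_integral lborel {a k<..} (\<lambda>lam. qfun n c a k lam * (cmod (G k lam))\<^sup>2))"

definition in_H :: "nat \<Rightarrow> (nat \<Rightarrow> real \<Rightarrow> complex) \<Rightarrow> bool" where
  "in_H n f \<longleftrightarrow> (\<forall>k\<in>{1..n}.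
      set_borel_measurable lborel {0<..} (f k) \<and>
      set_integrable lborel {0<..} (\<lambda>x. (cmod (f k x))\<^sup>2))"

definition norm_H :: "nat \<Rightarrow> (nat \<Rightarrow> real \<Rightarrow> complex) \<Rightarrow> real" where
  "norm_H n f = sqrt (\<Sum>k\<in>{1..n}. set_lebesgue_integral lborel {0<..} (\<lambda>x. (cmod (f k x))\<^sup>2))"

definition ae_eq_N :: "nat \<Rightarrow> (nat \<Rightarrow> real \<Rightarrow> complex) \<Rightarrow> (nat \<Rightarrow> real \<Rightarrow> complex) \<Rightarrow> bool" where
  "ae_eq_N n f g \<longleftrightarrow> (\<forall>k\<in>{1..n}. AE x in lborel. x > 0 \<longrightarrow> f k x = g k x)"

text \<open>C^infinity on a set S (one-sided derivatives at boundary points of S, e.g. [a,oo)).\<close>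
definition C_inf_on :: "real set \<Rightarrow> (real \<Rightarrow> 'b::real_normed_vector) \<Rightarrow> bool" where
  "C_inf_on S f \<longleftrightarrow> (\<exists>D. (\<forall>t\<in>S. D 0 t = f t) \<and>
      (\<forall>m. \<forall>t\<in>S. (D m has_vector_derivative D (Suc m) t) (at t within S)))"

definition schwartz :: "(real \<Rightarrow> 'b::real_normed_vector) \<Rightarrow> bool" where
  "schwartz f \<longleftrightarrow> (\<exists>D. D 0 = f \<and>
      (\<forall>m t. (D m has_vector_derivative D (Suc m) t) (at t)) \<and>
      (\<forall>m p. \<exists>B. \<forall>t. \<bar>t\<bar> ^ p * norm (D m t) \<le> B))"

definition Xset :: "nat \<Rightarrow> (nat \<Rightarrow> real) \<Rightarrow> (nat \<Rightarrow> real) \<Rightarrow> (real \<Rightarrow> real) \<Rightarrow> (nat \<Rightarrow> real \<Rightarrow> complex) set" where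
  "Xset n c a chi = {G. in_L2q n c a G \<and> (\<forall>k\<in>{1..n}.
      C_inf_on {a k..} (G k) \<and>
      schwartz (\<lambda>t. if a k \<le> t then complex_of_real (chi t) * G k t else 0))}"

definition Zmap :: "nat \<Rightarrow> (nat \<Rightarrow> real) \<Rightarrow> (nat \<Rightarrow> real) \<Rightarrow> (nat \<Rightarrow> real \<Rightarrow> complex) \<Rightarrow> nat \<Rightarrow> real \<Rightarrow> complex" where
  "Zmap n c a G = (\<lambda>k x. \<Sum>j\<in>{1..n}. set_lebesgue_integral lborel {a j<..}
      (\<lambda>lam. complex_of_real (qfun n c a j lam) * G j lam * Fminus n c a j (complex_of_real lam) k x))"

text \<open>T is (a representative of) the bounded linear extension tilde Z of Z from X to L2_q:
  it maps L2_q into H, is linear (up to a.e. equality), bounded, and agrees with Z on X.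
  Since X is dense, these properties determine T up to a.e. equality.\<close>
definition is_Ztilde :: "nat \<Rightarrow> (nat \<Rightarrow> real) \<Rightarrow> (nat \<Rightarrow> real) \<Rightarrow> (real \<Rightarrow> real)
     \<Rightarrow> ((nat \<Rightarrow> real \<Rightarrow> complex) \<Rightarrow> (nat \<Rightarrow> real \<Rightarrow> complex)) \<Rightarrow> bool" where
  "is_Ztilde n c a chi T \<longleftrightarrow>
     (\<forall>G. in_L2q n c a G \<longrightarrow> in_H n (T G)) \<and>
     (\<forall>G G' \<alpha> \<beta>. in_L2q n c a G \<and> in_L2q n c a G' \<longrightarrow>
        ae_eq_N n (T (\<lambda>j t. \<alpha> * G j t + \<beta> * G' j t)) (\<lambda>k x. \<alpha> * T G k x + \<beta> * T G' k x)) \<and>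
     (\<exists>C. \<forall>G. in_L2q n c a G \<longrightarrow> norm_H n (T G) \<le> C * norm_L2q n c a G) \<and>
     (\<forall>G\<in>Xset n c a chi. ae_eq_N n (T G) (Zmap n c a G))"

definition Yset :: "nat \<Rightarrow> (nat \<Rightarrow> real) \<Rightarrow> (nat \<Rightarrow> real) \<Rightarrow> (nat \<Rightarrow> real \<Rightarrow> complex) set" where
  "Yset n c a = {G. in_L2q n c a G \<and> (\<forall>j\<in>{1..n}. \<exists>K. compact K \<and> K \<inter> a ` {1..n} = {} \<and>
      (AE lam in lborel. a j < lam \<and> lam \<notin> K \<longrightarrow> G j lam = 0))}"

end

theory Submission
  imports Defs
begin


definition smooth :: "(real \<Rightarrow> complex) \<Rightarrow> bool" where
  "smooth f \<longleftrightarrow> (\<exists>D. D 0 = f \<and> (\<forall>m t. (D m has_vector_derivative D (Suc m) t) (at t)))"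

lemma Suc_choose': "Suc n choose k = (n choose k) + (if k = 0 then 0 else (n choose (k-1)))"
  by (cases k) simp_all

lemma leibniz_step:
  fixes Df Dg :: "nat \<Rightarrow> real \<Rightarrow> complex"
  assumes f: "\<And>m t. (Df m has_vector_derivative Df (Suc m) t) (at t)"
      and g: "\<And>m t. (Dg m has_vector_derivative Dg (Suc m) t) (at t)"
  shows "((\<lambda>t. \<Sum>i = 0..m. of_nat (m choose i) * (Df i t * Dg (m - i) t)) has_vector_derivative
          (\<Sum>i = 0..Suc m. of_nat (Suc m choose i) * (Df i t * Dg (Suc m - i) t))) (at t)"
proof -
  have d: "((\<lambda>t. \<Sum>i = 0..m. of_nat (m choose i) * (Df i t * Dg (m - i) t)) has_vector_derivative
          (\<Sum>i = 0..m. of_nat (m choose i) * (Df i t * Dg (Suc (m - i)) t + Df (Suc i) t * Dg (m - i) t))) (at t)"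
  proof (rule has_vector_derivative_sum)
    fix i
    show "((\<lambda>x. of_nat (m choose i) * (Df i x * Dg (m - i) x)) has_vector_derivative
          of_nat (m choose i) * (Df i t * Dg (Suc (m - i)) t + Df (Suc i) t * Dg (m - i) t)) (at t)"
    proof -
      have "((\<lambda>x. Df i x * Dg (m - i) x) has_vector_derivative
          (Df i t * Dg (Suc (m - i)) t + Df (Suc i) t * Dg (m - i) t)) (at t)"
        by (rule has_vector_derivative_mult[OF f g])
      from has_vector_derivative_mult[OF has_vector_derivative_const this]
      show ?thesis by simp
    qed
  qed
  have sumeq: "(\<Sum>i = 0..m. of_nat (m choose i) * (Df i t * Dg (Suc (m - i)) t + Df (Suc i) t * Dg (m - i) t))
      = (\<Sum>i = 0..Suc m. of_nat (Suc m choose i) * (Df i t * Dg (Suc m - i) t))"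
  proof -
    define u where "u = (\<lambda>i. Df i t * Dg (Suc m - i) t)"
    have "(\<Sum>i = 0..Suc m. of_nat (Suc m choose i) * u i)
        = (\<Sum>i = 0..Suc m. of_nat (m choose i) * u i) + (\<Sum>i = 0..Suc m. (if i = 0 then 0 else of_nat (m choose (i - 1))) * u i)"
      unfolding sum.distrib[symmetric]
      by (intro sum.cong refl) (rename_tac i, case_tac "i = 0", auto simp: Suc_choose' algebra_simps)
    also have "(\<Sum>i = 0..Suc m. of_nat (m choose i) * u i) = (\<Sum>i = 0..m. of_nat (m choose i) * u i)"
      by (simp add: sum.atLeast0_atMost_Suc)
    also have "(\<Sum>i = 0..Suc m. (if i = 0 then 0 else of_nat (m choose (i - 1))) * u i)
        = (\<Sum>i = 0..m. of_nat (m choose i) * u (Suc i))"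
      by (subst sum.atLeast0_atMost_Suc_shift) simp
    finally have "(\<Sum>i = 0..Suc m. of_nat (Suc m choose i) * u i) =
        (\<Sum>i = 0..m. of_nat (m choose i) * u i) + (\<Sum>i = 0..m. of_nat (m choose i) * u (Suc i))" .
    moreover have "(\<Sum>i = 0..m. of_nat (m choose i) * u i) = (\<Sum>i = 0..m. of_nat (m choose i) * (Df i t * Dg (Suc (m - i)) t))"
      by (intro sum.cong) (auto simp: u_def Suc_diff_le)
    moreover have "(\<Sum>i = 0..m. of_nat (m choose i) * u (Suc i)) = (\<Sum>i = 0..m. of_nat (m choose i) * (Df (Suc i) t * Dg (m - i) t))"
      by (intro sum.cong) (auto simp: u_def)
    ultimately show ?thesis by (simp add: u_def algebra_simps sum.distrib)
  qed
  show ?thesis using d sumeq by simp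
qed

lemma smooth_mult:
  assumes "smooth f" "smooth g" shows "smooth (\<lambda>t. f t * g t)"
proof -
  obtain Df where f0: "Df 0 = f" and f: "\<And>m t. (Df m has_vector_derivative Df (Suc m) t) (at t)"
    using assms(1) unfolding smooth_def by blast
  obtain Dg where g0: "Dg 0 = g" and g: "\<And>m t. (Dg m has_vector_derivative Dg (Suc m) t) (at t)"
    using assms(2) unfolding smooth_def by blast
  define D where "D = (\<lambda>m t. \<Sum>i = 0..m. of_nat (m choose i) * (Df i t * Dg (m - i) t))"
  have "D 0 = (\<lambda>t. f t * g t)" using f0 g0 by (simp add: D_def)
  moreover have "\<forall>m t. (D m has_vector_derivative D (Suc m) t) (at t)"
    unfolding D_def using leibniz_step[of Df Dg, OF f g] by blast
  ultimately show ?thesis unfolding smooth_def by blast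
qed

lemma smooth_poly:
  fixes p :: "real \<Rightarrow> complex"
  assumes "polynomial_function p" shows "smooth p"
proof -
  define step where "step = (\<lambda>q::real\<Rightarrow>complex. SOME q'. polynomial_function q' \<and> (\<forall>x. (q has_vector_derivative q' x) (at x)))"
  have st: "polynomial_function (step q) \<and> (\<forall>x. (q has_vector_derivative step q x) (at x))"
    if pq: "polynomial_function q" for q
  proof -
    obtain q' where "polynomial_function q'" "\<And>x. (q has_vector_derivative q' x) (at x)"
      using pq has_vector_derivative_polynomial_function by blast
    then show ?thesis unfolding step_def by (intro someI[where x=q' and P="\<lambda>q'. polynomial_function q' \<and> (\<forall>x. (q has_vector_derivative q' x) (at x))"]) blast
  qed
  define D where "D = (\<lambda>m. (step ^^ m) p)"
  have pD: "polynomial_function (D m)" for m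
    by (induction m) (auto simp: D_def assms st)
  have "\<forall>m t. (D m has_vector_derivative D (Suc m) t) (at t)"
    using st[OF pD] by (simp add: D_def)
  moreover have "D 0 = p" by (simp add: D_def)
  ultimately show ?thesis unfolding smooth_def by blast
qed

lemma smooth_const: "smooth (\<lambda>t. c)"
  using smooth_poly[of "\<lambda>t. c"] by simp

lemma smooth_chi_affine:
  assumes "C_inf_on UNIV chi"
  shows "smooth (\<lambda>t. complex_of_real (chi (u + v * t)))"
proof -
  obtain D where D0: "\<And>t. D 0 t = chi t"
     and D: "\<And>m t. (D m has_vector_derivative D (Suc m) t) (at t)"
    using assms unfolding C_inf_on_def by auto
  define E where "E = (\<lambda>m t. complex_of_real (D m (u + v * t) * v ^ m))"
  have "(E m has_vector_derivative E (Suc m) t) (at t)" for m t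
  proof -
    have d1: "(D m has_real_derivative D (Suc m) (u + v * t)) (at (u + v * t))"
      using D[of m "u + v * t"] by (simp add: has_real_derivative_iff_has_vector_derivative)
    have d2: "((\<lambda>t. u + v * t) has_real_derivative v) (at t)"
      by (auto intro!: derivative_eq_intros)
    have "((\<lambda>t. D m (u + v * t) * v ^ m) has_real_derivative D (Suc m) (u + v * t) * v * v ^ m) (at t)"
      using DERIV_chain2[OF d1 d2] by (auto intro!: derivative_eq_intros)
    then have "((\<lambda>t. D m (u + v * t) * v ^ m) has_real_derivative D (Suc m) (u + v * t) * v ^ Suc m) (at t)"
      by (simp add: algebra_simps)
    from has_vector_derivative_of_real[OF this] show ?thesis unfolding E_def .
  qed
  moreover have "E 0 = (\<lambda>t. complex_of_real (chi (u + v * t)))"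
    by (simp add: E_def D0)
  ultimately show ?thesis unfolding smooth_def by blast
qed

lemma deriv_seq_zero:
  fixes D :: "nat \<Rightarrow> real \<Rightarrow> complex"
  assumes D: "\<And>m t. (D m has_vector_derivative D (Suc m) t) (at t)"
    and U: "open U" and z: "\<And>t. t \<in> U \<Longrightarrow> D 0 t = 0" and t: "t \<in> U"
  shows "D m t = 0"
  using t
proof (induction m arbitrary: t)
  case 0 then show ?case using z by simp
next
  case (Suc m)
  have "((\<lambda>_. 0) has_vector_derivative D (Suc m) t) (at t)"
    by (rule has_vector_derivative_transform_within_open[OF D U Suc.prems]) (simp add: Suc.IH)
  moreover have "((\<lambda>_. 0::complex) has_vector_derivative 0) (at t)" by simp
  ultimately show ?case using vector_derivative_unique_at by metis
qed

lemma smooth_schwartz: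
  assumes "smooth f" and z: "\<And>t. t \<notin> {u..v} \<Longrightarrow> f t = 0"
  shows "schwartz f"
proof -
  obtain D where D0: "D 0 = f" and D: "\<And>m t. (D m has_vector_derivative D (Suc m) t) (at t)"
    using assms(1) unfolding smooth_def by blast
  have zero: "D m t = 0" if "t \<notin> {u..v}" for m t
    by (rule deriv_seq_zero[of D, OF D, of "- {u..v}"]) (use that z D0 in auto)
  have cont: "continuous_on {u..v} (D m)" for m
    using D by (meson continuous_at_imp_continuous_on has_vector_derivative_continuous)
  have "\<exists>B. \<forall>t. \<bar>t\<bar> ^ p * norm (D m t) \<le> B" for m p
  proof -
    obtain B where B: "\<And>t. t \<in> {u..v} \<Longrightarrow> norm (D m t) \<le> B"
      using compact_imp_bounded[OF compact_continuous_image[OF cont compact_Icc]]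
      unfolding bounded_iff by (metis image_eqI)
    define R where "R = max \<bar>u\<bar> \<bar>v\<bar>"
    have "\<bar>t\<bar> ^ p * norm (D m t) \<le> R ^ p * max B 0" for t
    proof (cases "t \<in> {u..v}")
      case True
      then have "\<bar>t\<bar> \<le> R" by (auto simp: R_def)
      then have "\<bar>t\<bar> ^ p \<le> R ^ p" by (simp add: power_mono)
      moreover have "norm (D m t) \<le> max B 0" using B[OF True] by simp
      moreover have "0 \<le> R ^ p" by (simp add: R_def)
      ultimately show ?thesis by (intro mult_mono) auto
    next
      case False
      then show ?thesis using zero[OF False] by (simp add: R_def)
    qed
    then show ?thesis by blast
  qed
  then show ?thesis unfolding schwartz_def using D0 D by blast
qed

lemma smooth_C_inf: "smooth f \<Longrightarrow> C_inf_on S f"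
  unfolding smooth_def C_inf_on_def
  by (metis has_vector_derivative_at_within)

lemma smooth_continuous: "smooth f \<Longrightarrow> continuous_on S f"
  unfolding smooth_def
  by (metis continuous_at_imp_continuous_on has_vector_derivative_continuous)




lemma psqrt_real: "psqrt (complex_of_real r) =
   (if 0 \<le> r then complex_of_real (sqrt r) else - \<i> * complex_of_real (sqrt (- r)))"
  by (auto simp: psqrt_def csqrt_of_real)

lemma xi_real: "xi c a l (complex_of_real lam) =
   (if 0 \<le> (lam - a l) / c l then complex_of_real (sqrt ((lam - a l) / c l))
    else - \<i> * complex_of_real (sqrt (- ((lam - a l) / c l))))"
proof -
  have "(complex_of_real lam - complex_of_real (a l)) / complex_of_real (c l) = complex_of_real ((lam - a l) / c l)"
    by simp
  then show ?thesis unfolding xi_def psqrt_real[symmetric] by simp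
qed

lemma xi_meas: "(\<lambda>lam. xi c a l (complex_of_real lam)) \<in> borel_measurable borel"
  unfolding xi_real by measurable

lemma Re_xi_nonneg: "0 \<le> Re (xi c a l (complex_of_real lam))"
  unfolding xi_real by auto

lemma Im_xi_nonpos: "Im (xi c a l (complex_of_real lam)) \<le> 0"
  unfolding xi_real by auto

lemma xi_above: "0 < c l \<Longrightarrow> a l \<le> lam \<Longrightarrow> xi c a l (complex_of_real lam) = complex_of_real (sqrt ((lam - a l) / c l))"
  unfolding xi_real by auto

lemma norm_xi: "0 < c l \<Longrightarrow> cmod (xi c a l (complex_of_real lam)) = sqrt (\<bar>lam - a l\<bar> / c l)"
  unfolding xi_real by (auto simp: norm_mult abs_div zero_le_divide_iff abs_of_nonneg abs_of_neg minus_divide_left)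

lemma wfun_ge:
  assumes c: "\<forall>l\<in>{1..n}. 0 < c l" and j: "j \<in> {1..n}"
  shows "c j * Re (xi c a j (complex_of_real lam)) \<le> cmod (wfun n c a lam)"
proof -
  have "cmod (wfun n c a lam) = cmod (\<Sum>l\<in>{1..n}. complex_of_real (c l) * xi c a l (complex_of_real lam))"
    by (simp add: wfun_def norm_mult)
  also have "\<dots> \<ge> Re (\<Sum>l\<in>{1..n}. complex_of_real (c l) * xi c a l (complex_of_real lam))"
    by (rule complex_Re_le_cmod)
  also have "Re (\<Sum>l\<in>{1..n}. complex_of_real (c l) * xi c a l (complex_of_real lam))
      = (\<Sum>l\<in>{1..n}. c l * Re (xi c a l (complex_of_real lam)))"
    by (simp add: Re_sum)
  also have "\<dots> \<ge> c j * Re (xi c a j (complex_of_real lam))"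
    using c j by (intro member_le_sum) (auto intro!: mult_nonneg_nonneg Re_xi_nonneg simp: order.strict_implies_order)
  finally show ?thesis by simp
qed

lemma qfun_nonneg:
  assumes "0 < c j" shows "0 \<le> qfun n c a j lam"
  unfolding qfun_def using assms by (auto intro!: divide_nonneg_nonneg mult_nonneg_nonneg Re_xi_nonneg)

lemma qfun_bound:
  assumes c: "\<forall>l\<in>{1..n}. 0 < c l" and j: "j \<in> {1..n}" and al: "a j < al" and lam: "al \<le> lam"
  shows "qfun n c a j lam \<le> 1 / (pi * c j * sqrt ((al - a j) / c j))"
proof -
  have cj: "0 < c j" using c j by auto
  define r where "r = sqrt ((lam - a j) / c j)"
  define r0 where "r0 = sqrt ((al - a j) / c j)"
  have r0: "0 < r0" using al cj by (simp add: r0_def)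
  have rr0: "r0 \<le> r" unfolding r_def r0_def using lam cj by (auto intro!: divide_right_mono)
  have xi: "xi c a j (complex_of_real lam) = complex_of_real r"
    using xi_above[of c j a lam, OF cj] al lam by (simp add: r_def)
  have w: "c j * r \<le> cmod (wfun n c a lam)" using wfun_ge[OF c j, of a lam] xi by simp
  have pos: "0 < c j * r" using cj r0 rr0 by simp
  have "qfun n c a j lam = c j * r / (pi * (cmod (wfun n c a lam))\<^sup>2)"
    unfolding qfun_def using al lam xi by simp
  also have "\<dots> \<le> c j * r / (pi * (c j * r)\<^sup>2)"
  proof (rule divide_left_mono)
    show "pi * (c j * r)\<^sup>2 \<le> pi * (cmod (wfun n c a lam))\<^sup>2"
      using pos w by (intro mult_left_mono power_mono) auto
    have "0 < (cmod (wfun n c a lam))\<^sup>2" using pos w by auto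
    moreover have "0 < (c j * r)\<^sup>2" using pos by (intro zero_less_power) auto
    ultimately show "0 < pi * (cmod (wfun n c a lam))\<^sup>2 * (pi * (c j * r)\<^sup>2)"
      by (intro mult_pos_pos) auto
  qed (use pos in simp)
  also have "\<dots> = 1 / (pi * c j * r)" using pos by (simp add: power2_eq_square field_simps)
  also have "\<dots> \<le> 1 / (pi * c j * r0)"
    using r0 rr0 cj by (intro divide_left_mono mult_left_mono) auto
  finally show ?thesis by (simp add: r0_def)
qed

lemma qfun_meas: "qfun n c a j \<in> borel_measurable borel"
proof -
  have m: "(\<lambda>lam. wfun n c a lam) \<in> borel_measurable borel"
    unfolding wfun_def using xi_meas by measurable
  show ?thesis unfolding qfun_def[abs_def] using m xi_meas by measurable
qed

lemma Fminus_meas: "(\<lambda>lam. Fminus n c a j (complex_of_real lam) k x) \<in> borel_measurable borel"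
proof -
  have cc: "continuous_on UNIV (cos :: complex \<Rightarrow> complex)" "continuous_on UNIV (sin :: complex \<Rightarrow> complex)"
     "continuous_on UNIV (exp :: complex \<Rightarrow> complex)"
    by (auto intro!: continuous_intros)
  have m1: "(\<lambda>lam. s_coef n c a j (complex_of_real lam)) \<in> borel_measurable borel"
    unfolding s_coef_def using xi_meas by measurable
  have m2: "(\<lambda>lam. cos (xi c a j (complex_of_real lam) * complex_of_real x)) \<in> borel_measurable borel"
    by (rule borel_measurable_continuous_on[OF cc(1)]) (use xi_meas in measurable)
  have m3: "(\<lambda>lam. sin (xi c a j (complex_of_real lam) * complex_of_real x)) \<in> borel_measurable borel"
    by (rule borel_measurable_continuous_on[OF cc(2)]) (use xi_meas in measurable)
  have m4: "(\<lambda>lam. exp (- \<i> * xi c a k (complex_of_real lam) * complex_of_real x)) \<in> borel_measurable borel"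
    by (rule borel_measurable_continuous_on[OF cc(3)]) (use xi_meas in measurable)
  show ?thesis unfolding Fminus_def using m1 m2 m3 m4 by measurable
qed

lemma Fminus_bound:
  assumes c: "\<forall>l\<in>{1..n}. 0 < c l" and j: "j \<in> {1..n}" and al: "a j < al"
    and lam: "al \<le> lam" "lam \<le> be" and x: "0 \<le> x"
  shows "cmod (Fminus n c a j (complex_of_real lam) k x) \<le>
    1 + (\<Sum>l\<in>{1..n}. c l * sqrt ((\<bar>al\<bar> + \<bar>be\<bar> + \<bar>a l\<bar>) / c l)) / (c j * sqrt ((al - a j) / c j))"
    (is "_ \<le> 1 + ?S / ?d")
proof -
  have cj: "0 < c j" using c j by auto
  have cnn: "\<And>l. l \<in> {1..n} \<Longrightarrow> 0 \<le> c l" using c by (simp add: order.strict_implies_order)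
  have Snn: "0 \<le> ?S" using cnn by (intro sum_nonneg) (auto intro!: mult_nonneg_nonneg divide_nonneg_nonneg)
  have dpos: "0 < ?d" using cj al by simp
  have bnd1: "1 \<le> 1 + ?S / ?d" using Snn dpos by simp
  show ?thesis
  proof (cases "k = j")
    case False
    have "cmod (Fminus n c a j (complex_of_real lam) k x) = exp (Im (xi c a k (complex_of_real lam)) * x)"
      using False by (simp add: Fminus_def)
    also have "\<dots> \<le> 1" using Im_xi_nonpos[of c a k lam] x by (simp add: mult_nonpos_nonneg)
    finally show ?thesis using bnd1 by linarith
  next
    case True
    define r where "r = sqrt ((lam - a j) / c j)"
    define r0 where "r0 = sqrt ((al - a j) / c j)"
    have r0: "0 < r0" using al cj by (simp add: r0_def)
    have rr0: "r0 \<le> r" unfolding r_def r0_def using lam cj by (auto intro!: divide_right_mono)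
    have xi: "xi c a j (complex_of_real lam) = complex_of_real r"
      using xi_above[of c j a lam, OF cj] al lam by (simp add: r_def)
    have cosb: "cmod (cos (complex_of_real r * complex_of_real x)) \<le> 1"
      by (metis abs_cos_le_one cos_of_real norm_of_real of_real_mult)
    have sinb: "cmod (sin (complex_of_real r * complex_of_real x)) \<le> 1"
      by (metis abs_sin_le_one sin_of_real norm_of_real of_real_mult)
    have num: "cmod (\<Sum>l\<in>{1..n} - {j}. complex_of_real (c l) * xi c a l (complex_of_real lam)) \<le> ?S"
    proof -
      have "cmod (\<Sum>l\<in>{1..n} - {j}. complex_of_real (c l) * xi c a l (complex_of_real lam))
          \<le> (\<Sum>l\<in>{1..n} - {j}. cmod (complex_of_real (c l) * xi c a l (complex_of_real lam)))"
        by (rule norm_sum)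
      also have "\<dots> \<le> (\<Sum>l\<in>{1..n} - {j}. c l * sqrt ((\<bar>al\<bar> + \<bar>be\<bar> + \<bar>a l\<bar>) / c l))"
      proof (rule sum_mono)
        fix l assume l: "l \<in> {1..n} - {j}"
        then have cl: "0 < c l" using c by auto
        have "cmod (complex_of_real (c l) * xi c a l (complex_of_real lam)) = c l * sqrt (\<bar>lam - a l\<bar> / c l)"
          using cl by (simp add: norm_mult norm_xi)
        also have "\<dots> \<le> c l * sqrt ((\<bar>al\<bar> + \<bar>be\<bar> + \<bar>a l\<bar>) / c l)"
          using cl lam by (intro mult_left_mono real_sqrt_le_mono divide_right_mono) auto
        finally show "cmod (complex_of_real (c l) * xi c a l (complex_of_real lam)) \<le> c l * sqrt ((\<bar>al\<bar> + \<bar>be\<bar> + \<bar>a l\<bar>) / c l)" .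
      qed
      also have "\<dots> \<le> ?S"
        using cnn by (intro sum_mono2) (auto intro!: mult_nonneg_nonneg divide_nonneg_nonneg)
      finally show ?thesis .
    qed
    have sb: "cmod (s_coef n c a j (complex_of_real lam)) \<le> ?S / ?d"
    proof -
      have "cmod (s_coef n c a j (complex_of_real lam)) =
         cmod (\<Sum>l\<in>{1..n} - {j}. complex_of_real (c l) * xi c a l (complex_of_real lam)) / (c j * r)"
        using cj r0 rr0 by (simp add: s_coef_def xi norm_divide norm_mult)
      also have "\<dots> \<le> ?S / (c j * r)"
        using num cj r0 rr0 by (intro divide_right_mono) auto
      also have "\<dots> \<le> ?S / ?d"
        using Snn cj r0 rr0 by (intro divide_left_mono mult_left_mono) (auto simp: r0_def[symmetric])
      finally show ?thesis .
    qed
    have "cmod (Fminus n c a j (complex_of_real lam) k x) \<le>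
        cmod (cos (complex_of_real r * complex_of_real x)) +
        cmod (s_coef n c a j (complex_of_real lam)) * cmod (sin (complex_of_real r * complex_of_real x))"
      using True norm_triangle_ineq4[of "cos (complex_of_real r * complex_of_real x)"
          "\<i> * s_coef n c a j (complex_of_real lam) * sin (complex_of_real r * complex_of_real x)"]
      by (simp add: Fminus_def xi norm_mult)
    also have "\<dots> \<le> 1 + ?S / ?d * 1"
      using cosb sinb sb Snn dpos by (intro add_mono mult_mono) auto
    finally show ?thesis by simp
  qed
qed




lemma averages:
  fixes f :: "real \<Rightarrow> complex"
  assumes fm: "f \<in> borel_measurable borel" and fb: "\<And>x. cmod (f x) \<le> M"
    and fz: "\<And>x. x \<notin> {u..v} \<Longrightarrow> f x = 0"
  shows "\<exists>A. (\<forall>m c d. continuous_on {c..d} (A m)) \<and> (\<forall>m x. cmod (A m x) \<le> M)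
     \<and> (AE x in lborel. (\<lambda>m. A m x) \<longlonglongrightarrow> f x)"
proof -
  have M0: "0 \<le> M" using fb[of 0] norm_ge_zero[of "f 0"] by linarith
  have "integrable lborel (\<lambda>x. indicator {u..v} x * M)"
    by (intro integrable_mult_left integrable_real_indicator) (auto simp: emeasure_lborel_Icc_eq)
  then have fi: "integrable lborel f"
  proof (rule Bochner_Integration.integrable_bound)
    show "f \<in> borel_measurable lborel" using fm by simp
    show "AE x in lborel. norm (f x) \<le> norm (indicator {u..v} x * M)"
      using fb fz M0 by (auto simp: indicator_def)
  qed
  then have fI: "f integrable_on UNIV" by (rule integrable_on_lborel)
  have fab: "f integrable_on {a..b}" for a b
    using integrable_on_subinterval[OF fI] by auto
  obtain N where N: "negligible N" and
     conv: "\<And>x e. \<lbrakk>x \<notin> N; 0 < e\<rbrakk> \<Longrightarrow>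
               \<exists>d>0. \<forall>h. 0 < h \<and> h < d \<longrightarrow>
                         norm(integral (cbox x (x + h *\<^sub>R One)) f /\<^sub>R h ^ DIM(real) - f x) < e"
    using integrable_ccontinuous_explicit[of f] fab by (metis cbox_interval)
  define A where "A = (\<lambda>m x. integral {x..x + 1 / (Suc m)} f /\<^sub>R (1 / Suc m))"
  have cont: "continuous_on {c..d} (A m)" for m c d
  proof -
    define h where "h = 1 / real (Suc m)"
    have h: "0 < h" by (simp add: h_def)
    have eq: "A m x = (integral {c - 1..x + h} f - integral {c - 1..x} f) /\<^sub>R h" if "x \<in> {c..d}" for x
    proof -
      have "integral {c - 1..x} f + integral {x..x + h} f = integral {c - 1..x + h} f"
        by (rule Henstock_Kurzweil_Integration.integral_combine) (use that h fab in auto)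
      then have "integral {x..x + h} f = integral {c - 1..x + h} f - integral {c - 1..x} f"
        by (metis add_diff_cancel_left')
      then show ?thesis unfolding A_def h_def by simp
    qed
    have c1: "continuous_on {c - 1..d + h} (\<lambda>y. integral {c - 1..y} f)"
      by (rule indefinite_integral_continuous_1[OF fab])
    have "continuous_on {c..d} (\<lambda>x. (integral {c - 1..x + h} f - integral {c - 1..x} f) /\<^sub>R h)"
    proof (intro continuous_on_scaleR continuous_on_diff continuous_on_const)
      show "continuous_on {c..d} (\<lambda>x. integral {c - 1..x + h} f)"
      proof -
        have "continuous_on {c..d} (\<lambda>x. x + h)" by (intro continuous_intros)
        then show ?thesis using continuous_on_compose2[OF c1, of "{c..d}" "\<lambda>x. x + h"] h by auto
      qed
      show "continuous_on {c..d} (\<lambda>x. integral {c - 1..x} f)"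
        using continuous_on_subset[OF c1] h by auto
    qed
    then show ?thesis by (rule continuous_on_eq) (use eq in simp)
  qed
  have bnd: "cmod (A m x) \<le> M" for m x
  proof -
    define h where "h = 1 / real (Suc m)"
    have h: "0 < h" by (simp add: h_def)
    have "norm (integral {x..x + h} f) \<le> M * h"
      using has_integral_bound[OF M0 integrable_integral[OF fab[of x "x+h", folded cbox_interval]]] fb h
      by (simp add: cbox_interval)
    then have "norm (integral {x..x + h} f) / h \<le> M" using h by (simp add: divide_simps)
    moreover have "A m x = integral {x..x + h} f /\<^sub>R h" by (simp add: A_def h_def)
    ultimately show ?thesis using h by (simp add: divide_simps)
  qed
  have lim: "(\<lambda>m. A m x) \<longlonglongrightarrow> f x" if xN: "x \<notin> N" for x
  proof (rule LIMSEQ_I)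
    fix e :: real assume e: "0 < e"
    from conv[OF xN e] obtain d where d: "d > 0" and dd: "\<forall>h. 0 < h \<and> h < d \<longrightarrow>
        norm(integral (cbox x (x + h *\<^sub>R One)) f /\<^sub>R h ^ DIM(real) - f x) < e"
      by (elim exE conjE)
    obtain m0 :: nat where m0: "1 / d < real m0" using reals_Archimedean2 by auto
    show "\<exists>no. \<forall>m\<ge>no. norm (A m x - f x) < e"
    proof (intro exI allI impI)
      fix m assume m: "m0 \<le> m"
      have "1 / d < real (Suc m)" using m0 m by linarith
      then have "1 / real (Suc m) < d" using d by (simp add: field_simps)
      then have "norm(integral (cbox x (x + (1 / real (Suc m)) *\<^sub>R One)) f /\<^sub>R (1 / real (Suc m)) ^ DIM(real) - f x) < e"
        by (intro dd[rule_format] conjI) auto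
      moreover have "integral (cbox x (x + (1 / real (Suc m)) *\<^sub>R One)) f /\<^sub>R (1 / real (Suc m)) ^ DIM(real) = A m x"
        unfolding A_def by (simp add: cbox_interval)
      ultimately show "norm (A m x - f x) < e" by simp
    qed
  qed
  have "N \<in> null_sets lebesgue" using N by (simp add: negligible_iff_null_sets)
  then obtain N' where N': "N' \<in> null_sets lborel" "N \<subseteq> N'"
    by (auto simp: null_sets_completion_iff2)
  have "AE x in lborel. x \<notin> N'" using N'(1) by (rule AE_not_in)
  then have "AE x in lborel. (\<lambda>m. A m x) \<longlonglongrightarrow> f x"
    by eventually_elim (use lim N'(2) in auto)
  then show ?thesis using cont bnd by (intro exI[of _ A]) simp
qed

lemma cont_all_intervals:
  fixes g :: "real \<Rightarrow> complex"
  assumes "\<And>c d. continuous_on {c..d} g" shows "continuous_on UNIV g"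
proof -
  have "continuous (at x) g" for x
    by (rule continuous_on_interior[OF assms[of "x - 1" "x + 1"]]) auto
  then show ?thesis by (simp add: continuous_at_imp_continuous_on)
qed

lemma norm3_sq: "(cmod (a + b + c))\<^sup>2 \<le> 3 * ((cmod a)\<^sup>2 + (cmod b)\<^sup>2 + (cmod c)\<^sup>2)"
proof -
  have "cmod (a + b + c) \<le> cmod a + cmod b + cmod c"
    by (metis add_mono norm_triangle_ineq order_trans order_refl)
  then have "(cmod (a + b + c))\<^sup>2 \<le> (cmod a + cmod b + cmod c)\<^sup>2"
    by (intro power_mono) auto
  also have "\<dots> \<le> 3 * ((cmod a)\<^sup>2 + (cmod b)\<^sup>2 + (cmod c)\<^sup>2)"
  proof -
    { fix x y z :: real
    have h1: "2*x*y \<le> x\<^sup>2 + y\<^sup>2" "2*x*z \<le> x\<^sup>2 + z\<^sup>2" "2*y*z \<le> y\<^sup>2 + z\<^sup>2"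
      using sum_squares_bound by auto
    have eq: "(x+y+z)\<^sup>2 = x\<^sup>2+y\<^sup>2+z\<^sup>2+2*x*y+2*x*z+2*y*z" by (simp add: power2_eq_square algebra_simps)
    have "(x+y+z)\<^sup>2 \<le> 3 * (x\<^sup>2+y\<^sup>2+z\<^sup>2)" unfolding eq using h1 by argo
    } note * = this
    show ?thesis by (rule *)
  qed
  finally show ?thesis .
qed


lemma truncation:
  fixes Gj :: "real \<Rightarrow> complex" and q :: "real \<Rightarrow> real"
  assumes Gm: "Gj \<in> borel_measurable borel"
    and Gi: "integrable lborel (\<lambda>l. q l * (cmod (Gj l))\<^sup>2)"
    and qm: "q \<in> borel_measurable borel" and qnn: "\<And>l. 0 \<le> q l"
    and e: "0 < e"
  shows "\<exists>M::real. 0 \<le> M \<and> integrable lborel (\<lambda>l. q l * (cmod (Gj l - (if cmod (Gj l) \<le> M then Gj l else 0)))\<^sup>2)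
     \<and> (\<integral>l. q l * (cmod (Gj l - (if cmod (Gj l) \<le> M then Gj l else 0)))\<^sup>2 \<partial>lborel) < e"
proof -
  define s where "s = (\<lambda>(M::nat) l. q l * (cmod (Gj l - (if cmod (Gj l) \<le> real M then Gj l else 0)))\<^sup>2)"
  have sm: "s M \<in> borel_measurable lborel" for M
    unfolding s_def using Gm qm by measurable
  have lim: "AE l in lborel. (\<lambda>M. s M l) \<longlonglongrightarrow> 0"
  proof (intro AE_I2)
    fix l
    obtain M0 :: nat where "cmod (Gj l) \<le> real M0" using real_arch_simple by blast
    then have "\<forall>M\<ge>M0. s M l = 0" unfolding s_def by auto
    then show "(\<lambda>M. s M l) \<longlonglongrightarrow> 0"
      by (intro tendsto_eventually) (auto simp: eventually_sequentially)
  qed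
  have bnd: "AE l in lborel. norm (s M l) \<le> q l * (cmod (Gj l))\<^sup>2" for M
    unfolding s_def using qnn by (intro AE_I2) (auto intro!: mult_left_mono simp: abs_mult)
  have "(\<lambda>M. integral\<^sup>L lborel (s M)) \<longlonglongrightarrow> integral\<^sup>L lborel (\<lambda>l::real. 0::real)"
    by (rule Bochner_Integration.integral_dominated_convergence[where w="\<lambda>l. q l * (cmod (Gj l))\<^sup>2" and s=s and f="\<lambda>l. 0" and M=lborel]) (use sm Gi lim bnd in auto)
  then have "eventually (\<lambda>M. integral\<^sup>L lborel (s M) < e) sequentially"
    using e by (intro order_tendstoD(2)) auto
  then obtain M where M: "integral\<^sup>L lborel (s M) < e"
    unfolding eventually_sequentially by blast
  have int: "integrable lborel (s M)"
    by (rule Bochner_Integration.integrable_dominated_convergence2[where w="\<lambda>l. q l * (cmod (Gj l))\<^sup>2"]) (use sm Gi lim bnd in auto)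
  show ?thesis
    by (intro exI[of _ "real M"] conjI) (use M int in \<open>auto simp: s_def\<close>)
qed




lemma approx_main:
  fixes Gj :: "real \<Rightarrow> complex" and q :: "real \<Rightarrow> real" and psi :: "real \<Rightarrow> complex"
  assumes Gm: "Gj \<in> borel_measurable borel"
    and Gi: "integrable lborel (\<lambda>l. q l * (cmod (Gj l))\<^sup>2)"
    and qm: "q \<in> borel_measurable borel" and qnn: "\<And>l. 0 \<le> q l"
    and qb: "\<And>l. l \<in> {u..v} \<Longrightarrow> q l \<le> Q"
    and supp: "AE l in lborel. l \<notin> {u0..v0} \<longrightarrow> Gj l = 0"
    and sub: "u \<le> u0" "v0 \<le> v" "u < v"
    and psi: "smooth psi" "\<And>t. t \<in> {u0..v0} \<Longrightarrow> psi t = 1" "\<And>t. t \<notin> {u..v} \<Longrightarrow> psi t = 0"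
    and e: "0 < e"
  shows "\<exists>P. polynomial_function P \<and> integrable lborel (\<lambda>l. q l * (cmod (psi l * P l - Gj l))\<^sup>2)
     \<and> (\<integral>l. q l * (cmod (psi l * P l - Gj l))\<^sup>2 \<partial>lborel) < e"
proof -
  have Q0: "0 \<le> Q" using qb[of u] qnn[of u] sub by auto
  have e9: "0 < e / 9" using e by simp
  obtain M where M0: "0 \<le> M" and
    sint: "integrable lborel (\<lambda>l. q l * (cmod (Gj l - (if cmod (Gj l) \<le> M then Gj l else 0)))\<^sup>2)" and
    sless: "(\<integral>l. q l * (cmod (Gj l - (if cmod (Gj l) \<le> M then Gj l else 0)))\<^sup>2 \<partial>lborel) < e / 9"
    using truncation[OF Gm Gi qm qnn e9] by blast
  define GM where "GM = (\<lambda>l. if cmod (Gj l) \<le> M then Gj l else 0)"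
  define f where "f = (\<lambda>l. if l \<in> {u0..v0} then GM l else 0)"
  have fm: "f \<in> borel_measurable borel" unfolding f_def GM_def using Gm by measurable
  have fb: "cmod (f l) \<le> M" for l using M0 by (auto simp: f_def GM_def)
  have fz: "f l = 0" if "l \<notin> {u0..v0}" for l using that by (auto simp: f_def)
  have fGM: "AE l in lborel. f l = GM l" using supp
  proof eventually_elim
    case (elim l)
    show ?case
    proof (cases "l \<in> {u0..v0}")
      case False
      then have "Gj l = 0" using elim by blast
      then show ?thesis using False M0 unfolding f_def GM_def by simp
    qed (simp add: f_def)
  qed
  obtain A where Ac: "\<And>m c d. continuous_on {c..d} (A m)" and Ab: "\<And>m x. cmod (A m x) \<le> M"
    and Al: "AE x in lborel. (\<lambda>m. A m x) \<longlonglongrightarrow> f x"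
    using averages[OF fm fb fz] by blast
  have AcU: "continuous_on UNIV (A m)" for m by (rule cont_all_intervals[OF Ac])
  have Am: "A m \<in> borel_measurable borel" for m by (rule borel_measurable_continuous_onI[OF AcU])
  obtain Psi where Psi: "\<And>t. cmod (psi t) \<le> Psi" and Psi0: "0 \<le> Psi"
  proof -
    have "continuous_on {u..v} psi" using smooth_continuous[OF psi(1)] .
    then obtain B where B: "\<And>t. t \<in> {u..v} \<Longrightarrow> cmod (psi t) \<le> B"
      using compact_imp_bounded[OF compact_continuous_image[OF \<open>continuous_on {u..v} psi\<close> compact_Icc]]
      unfolding bounded_iff by (metis image_eqI)
    have "cmod (psi t) \<le> max B 0" for t using B[of t] psi(3)[of t] by (cases "t \<in> {u..v}") auto
    then show thesis using that[of "max B 0"] by auto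
  qed
  have psim: "psi \<in> borel_measurable borel"
    by (rule borel_measurable_continuous_onI[OF smooth_continuous[OF psi(1)]])
  define r where "r = (\<lambda>m l. q l * (cmod (psi l * A m l - f l))\<^sup>2)"
  have fpsi: "f l = psi l * f l" for l by (cases "l \<in> {u0..v0}") (auto simp: psi(2) fz)
  have rm: "r m \<in> borel_measurable lborel" for m unfolding r_def using qm psim Am fm by measurable
  define w where "w = (\<lambda>l. indicator {u..v} l * (Q * Psi\<^sup>2 * (2 * M)\<^sup>2))"
  have wi: "integrable lborel w" unfolding w_def
    by (intro integrable_mult_left integrable_real_indicator) (auto simp: emeasure_lborel_Icc_eq)
  have rb: "AE l in lborel. norm (r m l) \<le> w l" for m
  proof (intro AE_I2)
    fix l
    have eq: "psi l * A m l - f l = psi l * (A m l - f l)" by (metis fpsi right_diff_distrib)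
    show "norm (r m l) \<le> w l"
    proof (cases "l \<in> {u..v}")
      case True
      have "cmod (A m l - f l) \<le> 2 * M"
        using norm_triangle_ineq4[of "A m l" "f l"] Ab[of m l] fb[of l] by linarith
      then have "cmod (psi l * (A m l - f l)) \<le> Psi * (2 * M)"
        using Psi[of l] by (simp add: norm_mult mult_mono Psi0)
      then have "(cmod (psi l * (A m l - f l)))\<^sup>2 \<le> (Psi * (2 * M))\<^sup>2"
        by (intro power_mono) auto
      then have "q l * (cmod (psi l * (A m l - f l)))\<^sup>2 \<le> Q * (Psi * (2 * M))\<^sup>2"
        using qb[OF True] qnn[of l] by (intro mult_mono) auto
      then show ?thesis using True qnn[of l]
        by (simp add: r_def w_def eq power_mult_distrib)
    next
      case False
      then have "f l = 0" using sub by (intro fz) auto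
      then show ?thesis using False by (simp add: r_def w_def eq psi(3))
    qed
  qed
  have rl: "AE l in lborel. (\<lambda>m. r m l) \<longlonglongrightarrow> 0"
    using Al
  proof eventually_elim
    case (elim l)
    have "(\<lambda>m. q l * (cmod (psi l * A m l - f l))\<^sup>2) \<longlonglongrightarrow> q l * (cmod (psi l * f l - f l))\<^sup>2"
      by (intro tendsto_intros elim)
    then show ?case by (simp add: r_def flip: fpsi)
  qed
  have "(\<lambda>m. integral\<^sup>L lborel (r m)) \<longlonglongrightarrow> integral\<^sup>L lborel (\<lambda>l::real. 0::real)"
    by (rule Bochner_Integration.integral_dominated_convergence[where w=w and s=r and f="\<lambda>l. 0" and M=lborel])
       (use rm wi rl rb in auto)
  then have "eventually (\<lambda>m. integral\<^sup>L lborel (r m) < e / 9) sequentially"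
    using e by (intro order_tendstoD(2)) auto
  then obtain m where rless: "integral\<^sup>L lborel (r m) < e / 9"
    unfolding eventually_sequentially by blast
  have rint: "integrable lborel (r m)"
    by (rule Bochner_Integration.integrable_dominated_convergence2[where w=w and s=r and f="\<lambda>l. 0" and M=lborel])
       (use rm wi rl rb in auto)
  define K0 where "K0 = Q * Psi\<^sup>2 * (v - u) + 1"
  have K0: "0 < K0"
  proof -
    have "0 \<le> Q * Psi\<^sup>2 * (v - u)" using Q0 sub by (intro mult_nonneg_nonneg) auto
    then show ?thesis by (simp add: K0_def)
  qed
  define eta where "eta = sqrt (e / (9 * K0))"
  have eta: "0 < eta" using e K0 by (simp add: eta_def)
  obtain P where P: "polynomial_function P" and PA: "\<And>x. x \<in> {u..v} \<Longrightarrow> norm (A m x - P x) < eta"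
  proof -
    have "continuous_on {u..v} (A m)" using Ac by blast
    from Stone_Weierstrass_polynomial_function[OF compact_Icc this eta]
    obtain P where "polynomial_function P" "\<forall>x\<in>{u..v}. norm (A m x - P x) < eta" by (elim exE conjE)
    then show thesis using that by blast
  qed
  have Pm: "P \<in> borel_measurable borel"
    by (rule borel_measurable_continuous_onI[OF continuous_on_polymonial_function[OF P]])
  define p where "p = (\<lambda>l. q l * (cmod (psi l * P l - psi l * A m l))\<^sup>2)"
  define w2 where "w2 = (\<lambda>l. indicator {u..v} l * (Q * Psi\<^sup>2 * eta\<^sup>2))"
  have w2i: "integrable lborel w2" unfolding w2_def
    by (intro integrable_mult_left integrable_real_indicator) (auto simp: emeasure_lborel_Icc_eq)
  have pm: "p \<in> borel_measurable lborel" unfolding p_def using qm psim Am Pm by measurable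
  have pb: "p l \<le> w2 l" for l
  proof (cases "l \<in> {u..v}")
    case True
    have e1: "cmod (psi l * P l - psi l * A m l) = cmod (psi l) * cmod (A m l - P l)"
      by (simp add: norm_mult norm_minus_commute right_diff_distrib[symmetric])
    have "cmod (psi l) * cmod (A m l - P l) \<le> Psi * eta"
      using Psi[of l] PA[OF True] Psi0 by (intro mult_mono) auto
    then have "cmod (psi l * P l - psi l * A m l) \<le> Psi * eta" using e1 by simp
    then have "(cmod (psi l * P l - psi l * A m l))\<^sup>2 \<le> (Psi * eta)\<^sup>2"
      by (intro power_mono) auto
    then have "p l \<le> Q * (Psi * eta)\<^sup>2"
      unfolding p_def using qb[OF True] qnn[of l] by (intro mult_mono) auto
    then show ?thesis using True by (simp add: w2_def power_mult_distrib)
  next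
    case False
    then show ?thesis by (simp add: p_def w2_def psi(3))
  qed
  have pnn: "0 \<le> p l" for l unfolding p_def using qnn by simp
  have pint: "integrable lborel p"
    by (rule Bochner_Integration.integrable_bound[OF w2i pm]) (use pb pnn in \<open>auto intro!: AE_I2 order_trans[OF _ abs_ge_self]\<close>)
  have "integral\<^sup>L lborel p \<le> integral\<^sup>L lborel w2"
    by (rule integral_mono[OF pint w2i pb])
  also have "integral\<^sup>L lborel w2 = Q * Psi\<^sup>2 * eta\<^sup>2 * (v - u)"
    using sub by (simp add: w2_def)
  also have "\<dots> = Q * Psi\<^sup>2 * (v - u) * (e / (9 * K0))"
    using e K0 by (simp add: eta_def)
  also have "\<dots> < e / 9"
  proof -
    have "Q * Psi\<^sup>2 * (v - u) < K0" by (simp add: K0_def)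
    then have "Q * Psi\<^sup>2 * (v - u) * (e / (9 * K0)) < K0 * (e / (9 * K0))"
      using e K0 by (intro mult_strict_right_mono) auto
    also have "\<dots> = e / 9" using K0 by simp
    finally show ?thesis .
  qed
  finally have pless: "integral\<^sup>L lborel p < e / 9" .
  define s where "s = (\<lambda>l. q l * (cmod (Gj l - GM l))\<^sup>2)"
  have sint': "integrable lborel s" using sint by (simp add: s_def GM_def)
  have sless': "integral\<^sup>L lborel s < e / 9" using sless by (simp add: s_def GM_def)
  define g where "g = (\<lambda>l. q l * (cmod (psi l * P l - Gj l))\<^sup>2)"
  have gm: "g \<in> borel_measurable lborel" unfolding g_def using qm psim Pm Gm by measurable
  have gb: "AE l in lborel. g l \<le> 3 * (p l + r m l + s l)"
    using fGM
  proof eventually_elim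
    case (elim l)
    have "psi l * P l - Gj l = (psi l * P l - psi l * A m l) + (psi l * A m l - f l) + (GM l - Gj l)"
      using elim by simp
    then have "(cmod (psi l * P l - Gj l))\<^sup>2 \<le> 3 * ((cmod (psi l * P l - psi l * A m l))\<^sup>2
        + (cmod (psi l * A m l - f l))\<^sup>2 + (cmod (Gj l - GM l))\<^sup>2)"
      using norm3_sq[of "psi l * P l - psi l * A m l" "psi l * A m l - f l" "GM l - Gj l"]
      by (simp add: norm_minus_commute)
    then have "q l * (cmod (psi l * P l - Gj l))\<^sup>2 \<le> q l * (3 * ((cmod (psi l * P l - psi l * A m l))\<^sup>2
        + (cmod (psi l * A m l - f l))\<^sup>2 + (cmod (Gj l - GM l))\<^sup>2))"
      using qnn[of l] by (intro mult_left_mono) auto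
    then show ?case by (simp add: g_def p_def r_def s_def algebra_simps)
  qed
  have int3: "integrable lborel (\<lambda>l. 3 * (p l + r m l + s l))"
    using pint rint sint' by auto
  have gnn: "0 \<le> g l" for l unfolding g_def using qnn by simp
  have gint: "integrable lborel g"
  proof (rule Bochner_Integration.integrable_bound[OF int3 gm])
    show "AE x in lborel. norm (g x) \<le> norm (3 * (p x + r m x + s x))"
      using gb
    proof eventually_elim
      case (elim l)
      then show ?case using gnn[of l] by (simp add: order_trans[OF _ abs_ge_self])
    qed
  qed
  have "integral\<^sup>L lborel g \<le> integral\<^sup>L lborel (\<lambda>l. 3 * (p l + r m l + s l))"
    by (rule integral_mono_AE[OF gint int3 gb])
  also have "\<dots> = 3 * (integral\<^sup>L lborel p + integral\<^sup>L lborel (r m) + integral\<^sup>L lborel s)"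
    using pint rint sint' by simp
  also have "\<dots> < e" using pless rless sless' by simp
  finally have "integral\<^sup>L lborel g < e" .
  then show ?thesis using P gint unfolding g_def by blast
qed




lemma amgm_t: "0 < (t::real) \<Longrightarrow> x * y \<le> (x\<^sup>2 / t + t * y\<^sup>2) / 2"
proof -
  assume t: "0 < t"
  have "0 \<le> (x - t * y)\<^sup>2" by simp
  then have "2 * t * (x * y) \<le> x\<^sup>2 + t\<^sup>2 * y\<^sup>2" by (simp add: power2_eq_square algebra_simps)
  then have "x * y \<le> (x\<^sup>2 + t\<^sup>2 * y\<^sup>2) / (2 * t)" using t by (simp add: field_simps)
  also have "\<dots> = (x\<^sup>2 / t + t * y\<^sup>2) / 2" using t by (simp add: field_simps power2_eq_square)
  finally show ?thesis .
qed

lemma pairing_conv: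
  fixes q :: "real \<Rightarrow> real" and F G :: "real \<Rightarrow> complex" and Gs :: "nat \<Rightarrow> real \<Rightarrow> complex"
  assumes qm: "q \<in> borel_measurable borel" and qnn: "\<And>l. 0 \<le> q l"
    and qb: "\<And>l. l \<in> {u..v} \<Longrightarrow> q l \<le> Q"
    and Fm: "F \<in> borel_measurable borel" and Fb: "\<And>l. l \<in> {u..v} \<Longrightarrow> cmod (F l) \<le> Fb"
    and Gm: "G \<in> borel_measurable borel" and Gsm: "\<And>m. Gs m \<in> borel_measurable borel"
    and Gz: "AE l in lborel. l \<notin> {u..v} \<longrightarrow> G l = 0"
    and Gsz: "\<And>m l. l \<notin> {u..v} \<Longrightarrow> Gs m l = 0"
    and Gi: "integrable lborel (\<lambda>l. q l * (cmod (G l))\<^sup>2)"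
    and Di: "\<And>m. integrable lborel (\<lambda>l. q l * (cmod (Gs m l - G l))\<^sup>2)"
    and Dl: "\<And>m. (\<integral>l. q l * (cmod (Gs m l - G l))\<^sup>2 \<partial>lborel) < 1 / real (Suc m)"
    and uv: "u \<le> v"
  shows "integrable lborel (\<lambda>l. complex_of_real (q l) * G l * F l)"
    and "\<And>m. integrable lborel (\<lambda>l. complex_of_real (q l) * Gs m l * F l)"
    and "(\<lambda>m. \<integral>l. complex_of_real (q l) * Gs m l * F l \<partial>lborel) \<longlonglongrightarrow>
         (\<integral>l. complex_of_real (q l) * G l * F l \<partial>lborel)"
proof -
  have Q0: "0 \<le> Q" using qb[of u] qnn[of u] uv by auto
  have Fb0: "0 \<le> Fb"
  proof -
    have "u \<in> {u..v}" using uv by simp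
    then have "cmod (F u) \<le> Fb" by (rule Fb)
    then show ?thesis by (meson norm_ge_zero order_trans)
  qed
  define I where "I = (\<lambda>l::real. indicator {u..v} l :: real)"
  have Ii: "integrable lborel (\<lambda>l. I l * c)" for c
    unfolding I_def by (intro integrable_mult_left integrable_real_indicator) (auto simp: emeasure_lborel_Icc_eq)
  have Iint: "integral\<^sup>L lborel (\<lambda>l. I l * c) = (v - u) * c" for c
    using uv by (simp add: I_def)
  have gen: "AE l in lborel. norm (complex_of_real (q l) * H l * F l) \<le> (q l * (cmod (H l))\<^sup>2 / t + t * (I l * (Q * Fb\<^sup>2))) / 2"
    if Hz: "AE l in lborel. l \<notin> {u..v} \<longrightarrow> H l = 0" and t: "0 < t" for H :: "real \<Rightarrow> complex" and t
    using Hz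
  proof eventually_elim
    case (elim l)
    show ?case
    proof (cases "l \<in> {u..v}")
      case False
      then show ?thesis using elim qnn[of l] t by (simp add: I_def)
    next
      case True
      have "norm (complex_of_real (q l) * H l * F l) = q l * (cmod (H l) * cmod (F l))"
        using qnn[of l] by (simp add: norm_mult)
      also have "\<dots> \<le> q l * (((cmod (H l))\<^sup>2 / t + t * (cmod (F l))\<^sup>2) / 2)"
        using qnn[of l] amgm_t[OF t] by (intro mult_left_mono) auto
      also have "\<dots> = (q l * (cmod (H l))\<^sup>2 / t + t * (q l * (cmod (F l))\<^sup>2)) / 2"
        by (simp add: algebra_simps)
      also have "\<dots> \<le> (q l * (cmod (H l))\<^sup>2 / t + t * (I l * (Q * Fb\<^sup>2))) / 2"
      proof -
        have "(cmod (F l))\<^sup>2 \<le> Fb\<^sup>2" using Fb[OF True] by (intro power_mono) auto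
        then have "q l * (cmod (F l))\<^sup>2 \<le> Q * Fb\<^sup>2"
          using qb[OF True] qnn[of l] by (intro mult_mono) auto
        then show ?thesis using t True by (simp add: I_def)
      qed
      finally show ?thesis .
    qed
  qed
  have intgen: "integrable lborel (\<lambda>l. complex_of_real (q l) * H l * F l)"
    if Hz: "AE l in lborel. l \<notin> {u..v} \<longrightarrow> H l = 0" and Hm: "H \<in> borel_measurable borel"
      and Hi: "integrable lborel (\<lambda>l. q l * (cmod (H l))\<^sup>2)" for H :: "real \<Rightarrow> complex"
  proof (rule Bochner_Integration.integrable_bound)
    show "integrable lborel (\<lambda>l. (q l * (cmod (H l))\<^sup>2 / 1 + 1 * (I l * (Q * Fb\<^sup>2))) / 2)"
      using Hi Ii by auto
    show "(\<lambda>l. complex_of_real (q l) * H l * F l) \<in> borel_measurable lborel"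
      using qm Hm Fm by measurable
    show "AE l in lborel. norm (complex_of_real (q l) * H l * F l) \<le>
        norm ((q l * (cmod (H l))\<^sup>2 / 1 + 1 * (I l * (Q * Fb\<^sup>2))) / 2)"
      using gen[OF Hz zero_less_one] by eventually_elim (auto intro: order_trans[OF _ abs_ge_self])
  qed
  have Dz: "AE l in lborel. l \<notin> {u..v} \<longrightarrow> Gs m l - G l = 0" for m
    using Gz by eventually_elim (use Gsz in auto)
  show i1: "integrable lborel (\<lambda>l. complex_of_real (q l) * G l * F l)"
    by (rule intgen[OF Gz Gm Gi])
  have i2: "integrable lborel (\<lambda>l. complex_of_real (q l) * (Gs m l - G l) * F l)" for m
    by (rule intgen[OF Dz]) (use Gm Gsm Di in auto)
  have eqm: "complex_of_real (q l) * Gs m l * F l = complex_of_real (q l) * (Gs m l - G l) * F l + complex_of_real (q l) * G l * F l" for m l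
    by (simp add: algebra_simps)
  show i3: "integrable lborel (\<lambda>l. complex_of_real (q l) * Gs m l * F l)" for m
    unfolding eqm using i1 i2 by auto
  show "(\<lambda>m. \<integral>l. complex_of_real (q l) * Gs m l * F l \<partial>lborel) \<longlonglongrightarrow>
         (\<integral>l. complex_of_real (q l) * G l * F l \<partial>lborel)"
  proof (rule LIMSEQ_I)
    fix e :: real assume e: "0 < e"
    define K where "K = (v - u) * (Q * Fb\<^sup>2) / 2"
    have K0: "0 \<le> K" using uv Q0 by (simp add: K_def)
    define t where "t = e / (2 * (K + 1))"
    have t: "0 < t" using e K0 by (simp add: t_def)
    have tK: "t * K < e / 2"
    proof -
      have "t * K < t * (K + 1)" using t by simp
      also have "\<dots> = e / 2" using K0 by (simp add: t_def field_simps)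
      finally show ?thesis .
    qed
    obtain N :: nat where N: "1 / (2 * t) / (e / 2) < real N" using reals_Archimedean2 by blast
    show "\<exists>no. \<forall>m\<ge>no. norm ((\<integral>l. complex_of_real (q l) * Gs m l * F l \<partial>lborel) - (\<integral>l. complex_of_real (q l) * G l * F l \<partial>lborel)) < e"
    proof (intro exI allI impI)
      fix m assume m: "N \<le> m"
      have "(\<integral>l. complex_of_real (q l) * Gs m l * F l \<partial>lborel) - (\<integral>l. complex_of_real (q l) * G l * F l \<partial>lborel)
          = (\<integral>l. complex_of_real (q l) * (Gs m l - G l) * F l \<partial>lborel)"
        unfolding eqm using i1 i2 by simp
      also have "norm \<dots> \<le> (\<integral>l. norm (complex_of_real (q l) * (Gs m l - G l) * F l) \<partial>lborel)"
        by (rule integral_norm_bound)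
      also have "\<dots> \<le> (\<integral>l. (q l * (cmod (Gs m l - G l))\<^sup>2 / t + t * (I l * (Q * Fb\<^sup>2))) / 2 \<partial>lborel)"
        by (rule integral_mono_AE) (use i2 Di Ii gen[OF Dz t] in auto)
      also have "\<dots> = ((\<integral>l. q l * (cmod (Gs m l - G l))\<^sup>2 \<partial>lborel) / t + t * ((v - u) * (Q * Fb\<^sup>2))) / 2"
        using Di Ii Iint by simp
      also have "\<dots> = (\<integral>l. q l * (cmod (Gs m l - G l))\<^sup>2 \<partial>lborel) / (2 * t) + t * K"
        by (simp add: K_def field_simps)
      also have "\<dots> < e / 2 + e / 2"
      proof (rule add_less_le_mono)
        have "(\<integral>l. q l * (cmod (Gs m l - G l))\<^sup>2 \<partial>lborel) / (2 * t) < (1 / real (Suc m)) / (2 * t)"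
          using Dl[of m] t by (intro divide_strict_right_mono) auto
        also have "\<dots> \<le> e / 2"
        proof -
          have "1 / (2 * t) / (e / 2) < real (Suc m)" using N m by linarith
          then have "(1 / (2 * t) / (e / 2)) * (e / 2) < real (Suc m) * (e / 2)"
            using e by (intro mult_strict_right_mono) auto
          then have "1 / (2 * t) < real (Suc m) * (e / 2)" using e by simp
          then have "(1 / (2 * t)) / real (Suc m) < (real (Suc m) * (e / 2)) / real (Suc m)"
            by (intro divide_strict_right_mono) auto
          moreover have "(1 / real (Suc m)) / (2 * t) = (1 / (2 * t)) / real (Suc m)" by simp
          moreover have "(real (Suc m) * (e / 2)) / real (Suc m) = e / 2"
            by (rule nonzero_mult_div_cancel_left) simp
          ultimately show ?thesis by linarith
        qed
        finally show "(\<integral>l. q l * (cmod (Gs m l - G l))\<^sup>2 \<partial>lborel) / (2 * t) < e / 2" .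
        show "t * K \<le> e / 2" using tK by simp
      qed
      finally show "norm ((\<integral>l. complex_of_real (q l) * Gs m l * F l \<partial>lborel) - (\<integral>l. complex_of_real (q l) * G l * F l \<partial>lborel)) < e"
        by simp
    qed
  qed
qed




lemma support_data:
  fixes aj :: real and K :: "real set" and g :: "real \<Rightarrow> complex"
  assumes K: "compact K" and aK: "aj \<notin> K"
    and AEK: "AE lam in lborel. aj < lam \<and> lam \<notin> K \<longrightarrow> g lam = (0::complex)"
  shows "\<exists>d B. 0 < d \<and> aj + d \<le> B \<and> (AE lam in lborel. lam \<notin> {aj + d..B} \<longrightarrow> indicator {aj<..} lam *\<^sub>R g lam = 0)"
proof -
  have "open (- K)" using compact_imp_closed[OF K] by auto
  then obtain d where d: "0 < d" "ball aj d \<subseteq> - K" using aK open_contains_ball by blast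
  obtain B0 where B0: "\<And>x. x \<in> K \<Longrightarrow> \<bar>x\<bar> \<le> B0"
    using compact_imp_bounded[OF K] unfolding bounded_iff by auto
  define B where "B = max B0 (aj + d)"
  have "AE lam in lborel. lam \<notin> {aj + d..B} \<longrightarrow> indicator {aj<..} lam *\<^sub>R g lam = 0"
    using AEK
  proof eventually_elim
    case (elim lam)
    show ?case
    proof (intro impI)
      assume nl: "lam \<notin> {aj + d..B}"
      show "indicator {aj<..} lam *\<^sub>R g lam = 0"
      proof (cases "aj < lam")
        case True
        have "lam \<notin> K"
        proof
          assume lK: "lam \<in> K"
          show False
          proof (cases "lam < aj + d")
            case True
            then have "lam \<in> ball aj d" using \<open>aj < lam\<close> by (auto simp: dist_real_def)
            then show False using d lK by auto
          next
            case False
            then have "B < lam" using nl by auto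
            then show False using B0[OF lK] by (auto simp: B_def)
          qed
        qed
        then show ?thesis using elim True by simp
      qed simp
    qed
  qed
  then show ?thesis using d by (intro exI[of _ d] exI[of _ B]) (auto simp: B_def)
qed

lemma cutoff:
  fixes chi :: "real \<Rightarrow> real"
  assumes chi_smooth: "C_inf_on UNIV chi"
    and chi0: "\<forall>t. t < AA + 1 \<longrightarrow> chi t = 0"
    and chi1: "\<forall>t. AA + 2 < t \<longrightarrow> chi t = 1"
    and d: "0 < d" and uv: "u0 \<le> v0"
  shows "\<exists>psi. smooth psi \<and> (\<forall>t\<in>{u0..v0}. psi t = 1) \<and> (\<forall>t. t \<notin> {u0 - d/2..v0 + 1} \<longrightarrow> psi t = 0)"
proof -
  define u where "u = u0 - d/2"
  define v where "v = v0 + 1"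
  define h where "h = min (d/4) (1/2)"
  have h: "0 < h" "h \<le> d/4" "h \<le> 1/2" using d by (auto simp: h_def)
  define psi where "psi = (\<lambda>t. complex_of_real (chi ((AA + 1 - u / h) + (1 / h) * t)) *
                               complex_of_real (chi ((AA + 1 + v / h) + (- 1 / h) * t)))"
  have arg1: "(AA + 1 - u / h) + (1 / h) * t = AA + 1 + (t - u) / h" for t
    by (simp add: diff_divide_distrib)
  have arg2: "(AA + 1 + v / h) + (- 1 / h) * t = AA + 1 + (v - t) / h" for t
    by (simp add: diff_divide_distrib)
  have sm: "smooth psi" unfolding psi_def
    by (intro smooth_mult smooth_chi_affine chi_smooth)
  have one: "psi t = 1" if t: "t \<in> {u0..v0}" for t
  proof -
    have "2 * h \<le> t - u" using t h by (auto simp: u_def)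
    then have "2 \<le> (t - u) / h" using h by (simp add: le_divide_eq)
    then have c1: "chi (AA + 1 + (t - u) / h) = 1" using chi1 by auto
    have "2 * h \<le> v - t" using t h by (auto simp: v_def)
    then have "2 \<le> (v - t) / h" using h by (simp add: le_divide_eq)
    then have c2: "chi (AA + 1 + (v - t) / h) = 1" using chi1 by auto
    show ?thesis unfolding psi_def arg1 arg2 c1 c2 by simp
  qed
  have zero: "psi t = 0" if t: "t \<notin> {u..v}" for t
  proof (cases "t < u")
    case True
    then have "(t - u) / h < 0" using h by (simp add: divide_neg_pos)
    then have "chi (AA + 1 + (t - u) / h) = 0" using chi0 by auto
    then show ?thesis unfolding psi_def arg1 by simp
  next
    case False
    then have "v < t" using t by auto
    then have "(v - t) / h < 0" using h by (simp add: divide_neg_pos)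
    then have "chi (AA + 1 + (v - t) / h) = 0" using chi0 by auto
    then show ?thesis unfolding psi_def arg2 by simp
  qed
  show ?thesis using sm one zero by (auto simp: u_def v_def)
qed




theorem lemma7p6:
  fixes n :: nat and c a :: "nat \<Rightarrow> real" and chi :: "real \<Rightarrow> real"
    and T :: "(nat \<Rightarrow> real \<Rightarrow> complex) \<Rightarrow> (nat \<Rightarrow> real \<Rightarrow> complex)"
    and G :: "nat \<Rightarrow> real \<Rightarrow> complex"
  assumes n2: "2 \<le> n"
    and cpos: "\<forall>k\<in>{1..n}. 0 < c k"
    and a0: "0 \<le> a 1"
    and amono: "\<forall>i j. 1 \<le> i \<and> i \<le> j \<and> j \<le> n \<longrightarrow> a i \<le> a j"
    and chi_smooth: "C_inf_on UNIV chi"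
    and chi0: "\<forall>t. t < a n + 1 \<longrightarrow> chi t = 0"
    and chi1: "\<forall>t. a n + 2 < t \<longrightarrow> chi t = 1"
    and T: "is_Ztilde n c a chi T"
    and G: "G \<in> Yset n c a"
  shows "\<forall>k\<in>{1..n}. AE x in lborel. 0 < x \<longrightarrow>
           T G k x = (\<Sum>j\<in>{1..n}. set_lebesgue_integral lborel {a j<..}
              (\<lambda>lam. complex_of_real (qfun n c a j lam) * G j lam
                       * Fminus n c a j (complex_of_real lam) k x))"
proof -
  have GL2: "in_L2q n c a G" and Ksup: "\<forall>j\<in>{1..n}. \<exists>K. compact K \<and> K \<inter> a ` {1..n} = {} \<and>
      (AE lam in lborel. a j < lam \<and> lam \<notin> K \<longrightarrow> G j lam = 0)"
    using G unfolding Yset_def by auto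
  define G' where "G' = (\<lambda>j l. indicator {a j<..} l *\<^sub>R G j l)"
  have "\<forall>j\<in>{1..n}. \<exists>p. 0 < fst p \<and> a j + fst p \<le> snd p \<and>
      (AE lam in lborel. lam \<notin> {a j + fst p..snd p} \<longrightarrow> G' j lam = 0)"
  proof
    fix j assume j: "j \<in> {1..n}"
    obtain K where K: "compact K" "K \<inter> a ` {1..n} = {}"
        "AE lam in lborel. a j < lam \<and> lam \<notin> K \<longrightarrow> G j lam = 0"
      using Ksup j by blast
    have "a j \<notin> K" using K(2) j by auto
    from support_data[OF K(1) this K(3)] obtain d B where
      "0 < d" "a j + d \<le> B" "AE lam in lborel. lam \<notin> {a j + d..B} \<longrightarrow> indicator {a j<..} lam *\<^sub>R G j lam = 0"
      by blast
    then show "\<exists>p. 0 < fst p \<and> a j + fst p \<le> snd p \<and>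
      (AE lam in lborel. lam \<notin> {a j + fst p..snd p} \<longrightarrow> G' j lam = 0)"
      by (intro exI[of _ "(d, B)"]) (simp add: G'_def)
  qed
  from bchoice[OF this] obtain pp where pp0: "\<forall>j\<in>{1..n}. 0 < fst (pp j) \<and> a j + fst (pp j) \<le> snd (pp j) \<and>
      (AE lam in lborel. lam \<notin> {a j + fst (pp j)..snd (pp j)} \<longrightarrow> G' j lam = 0)"
    by (elim exE)
  then have pp: "\<And>j. j \<in> {1..n} \<Longrightarrow> 0 < fst (pp j) \<and> a j + fst (pp j) \<le> snd (pp j) \<and>
      (AE lam in lborel. lam \<notin> {a j + fst (pp j)..snd (pp j)} \<longrightarrow> G' j lam = 0)"
    by blast
  define d where "d = (\<lambda>j. fst (pp j))"
  define u0 where "u0 = (\<lambda>j. a j + d j)"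
  define v0 where "v0 = (\<lambda>j. snd (pp j))"
  define u where "u = (\<lambda>j. u0 j - d j / 2)"
  define v where "v = (\<lambda>j. v0 j + 1)"
  have dpos: "\<And>j. j \<in> {1..n} \<Longrightarrow> 0 < d j" and uv0: "\<And>j. j \<in> {1..n} \<Longrightarrow> u0 j \<le> v0 j"
    and Gsupp: "\<And>j. j \<in> {1..n} \<Longrightarrow> AE lam in lborel. lam \<notin> {u0 j..v0 j} \<longrightarrow> G' j lam = 0"
    using pp by (auto simp: d_def u0_def v0_def)
  have au: "\<And>j. j \<in> {1..n} \<Longrightarrow> a j < u j" using dpos by (simp add: u_def u0_def)
  have uu0: "\<And>j. j \<in> {1..n} \<Longrightarrow> u j \<le> u0 j"
  proof -
    fix j assume "j \<in> {1..n}"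
    then have "0 < d j" by (rule dpos)
    then show "u j \<le> u0 j" by (simp add: u_def)
  qed
  have v0v: "\<And>j. v0 j \<le> v j" by (simp add: v_def)
  have uv: "\<And>j. j \<in> {1..n} \<Longrightarrow> u j < v j"
  proof -
    fix j assume j: "j \<in> {1..n}"
    show "u j < v j" using uu0[OF j] uv0[OF j] by (simp add: v_def)
  qed
  have "\<forall>j\<in>{1..n}. \<exists>psi. smooth psi \<and> (\<forall>t\<in>{u0 j..v0 j}. psi t = 1) \<and> (\<forall>t. t \<notin> {u j..v j} \<longrightarrow> psi t = 0)"
  proof
    fix j assume j: "j \<in> {1..n}"
    show "\<exists>psi. smooth psi \<and> (\<forall>t\<in>{u0 j..v0 j}. psi t = 1) \<and> (\<forall>t. t \<notin> {u j..v j} \<longrightarrow> psi t = 0)"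
      using cutoff[OF chi_smooth chi0 chi1 dpos[OF j] uv0[OF j]] unfolding u_def v_def .
  qed
  from bchoice[OF this] obtain psi where psi0: "\<forall>j\<in>{1..n}. smooth (psi j) \<and> (\<forall>t\<in>{u0 j..v0 j}. psi j t = 1) \<and> (\<forall>t. t \<notin> {u j..v j} \<longrightarrow> psi j t = 0)"
    by (elim exE)
  then have psi_sm: "\<And>j. j \<in> {1..n} \<Longrightarrow> smooth (psi j)"
    and psi_one: "\<And>j t. j \<in> {1..n} \<Longrightarrow> t \<in> {u0 j..v0 j} \<Longrightarrow> psi j t = 1"
    and psi_zero: "\<And>j t. j \<in> {1..n} \<Longrightarrow> t \<notin> {u j..v j} \<Longrightarrow> psi j t = 0"
    by blast+
  have cnn: "\<And>j. j \<in> {1..n} \<Longrightarrow> 0 < c j" using cpos by blast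
  have G'm: "G' j \<in> borel_measurable borel" if j: "j \<in> {1..n}" for j
    using GL2 j unfolding in_L2q_def set_borel_measurable_def G'_def by auto
  have G'eq: "indicator {a j<..} l *\<^sub>R (qfun n c a j l * (cmod (G j l))\<^sup>2) = qfun n c a j l * (cmod (G' j l))\<^sup>2" for j l
    by (simp add: G'_def indicator_def)
  have G'i: "integrable lborel (\<lambda>l. qfun n c a j l * (cmod (G' j l))\<^sup>2)" if j: "j \<in> {1..n}" for j
    using GL2 j unfolding in_L2q_def set_integrable_def G'eq by auto
  define Qb where "Qb = (\<lambda>j. 1 / (pi * c j * sqrt ((u j - a j) / c j)))"
  have qb: "qfun n c a j l \<le> Qb j" if j: "j \<in> {1..n}" and l: "l \<in> {u j..v j}" for j l
    unfolding Qb_def by (rule qfun_bound[of n c j a "u j" l, OF cpos j au[OF j]]) (use l in auto)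
  have qnn: "\<And>j l. j \<in> {1..n} \<Longrightarrow> 0 \<le> qfun n c a j l" using qfun_nonneg cnn by blast
  have "\<forall>m. \<exists>Pf. \<forall>j\<in>{1..n}. polynomial_function (Pf j) \<and>
     integrable lborel (\<lambda>l. qfun n c a j l * (cmod (psi j l * Pf j l - G' j l))\<^sup>2) \<and>
     (\<integral>l. qfun n c a j l * (cmod (psi j l * Pf j l - G' j l))\<^sup>2 \<partial>lborel) < 1 / real (Suc m)"
  proof
    fix m
    have pos: "0 < 1 / real (Suc m)" by (intro divide_pos_pos) auto
    have "\<forall>j\<in>{1..n}. \<exists>P. polynomial_function P \<and>
     integrable lborel (\<lambda>l. qfun n c a j l * (cmod (psi j l * P l - G' j l))\<^sup>2) \<and>
     (\<integral>l. qfun n c a j l * (cmod (psi j l * P l - G' j l))\<^sup>2 \<partial>lborel) < 1 / real (Suc m)"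
    proof
      fix j assume j: "j \<in> {1..n}"
      show "\<exists>P. polynomial_function P \<and>
       integrable lborel (\<lambda>l. qfun n c a j l * (cmod (psi j l * P l - G' j l))\<^sup>2) \<and>
       (\<integral>l. qfun n c a j l * (cmod (psi j l * P l - G' j l))\<^sup>2 \<partial>lborel) < 1 / real (Suc m)"
        by (rule approx_main[OF G'm[OF j] G'i[OF j] qfun_meas qnn[OF j] qb[OF j] Gsupp[OF j]
              uu0[OF j] v0v uv[OF j] psi_sm[OF j] psi_one[OF j] psi_zero[OF j] pos]) auto
    qed
    from bchoice[OF this] show "\<exists>Pf. \<forall>j\<in>{1..n}. polynomial_function (Pf j) \<and>
     integrable lborel (\<lambda>l. qfun n c a j l * (cmod (psi j l * Pf j l - G' j l))\<^sup>2) \<and>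
     (\<integral>l. qfun n c a j l * (cmod (psi j l * Pf j l - G' j l))\<^sup>2 \<partial>lborel) < 1 / real (Suc m)" .
  qed
  from choice[OF this] obtain Pf where Pf0: "\<forall>m. \<forall>j\<in>{1..n}. polynomial_function (Pf m j) \<and>
     integrable lborel (\<lambda>l. qfun n c a j l * (cmod (psi j l * Pf m j l - G' j l))\<^sup>2) \<and>
     (\<integral>l. qfun n c a j l * (cmod (psi j l * Pf m j l - G' j l))\<^sup>2 \<partial>lborel) < 1 / real (Suc m)"
    by (elim exE)
  then have Pf_poly: "\<And>m j. j \<in> {1..n} \<Longrightarrow> polynomial_function (Pf m j)"
    and Pf_int: "\<And>m j. j \<in> {1..n} \<Longrightarrow> integrable lborel (\<lambda>l. qfun n c a j l * (cmod (psi j l * Pf m j l - G' j l))\<^sup>2)"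
    and Pf_less: "\<And>m j. j \<in> {1..n} \<Longrightarrow> (\<integral>l. qfun n c a j l * (cmod (psi j l * Pf m j l - G' j l))\<^sup>2 \<partial>lborel) < 1 / real (Suc m)"
    by blast+
  define gs where "gs = (\<lambda>m j t. if j \<in> {1..n} then psi j t * Pf m j t else 0)"

  have gs_sm: "smooth (gs m j)" if j: "j \<in> {1..n}" for m j
  proof -
    have "smooth (\<lambda>t. psi j t * Pf m j t)"
      by (intro smooth_mult psi_sm[OF j] smooth_poly Pf_poly[OF j])
    then show ?thesis using j by (simp add: gs_def)
  qed
  have gs_zero: "gs m j t = 0" if "j \<in> {1..n} \<Longrightarrow> t \<notin> {u j..v j}" for m j t
    using that psi_zero by (auto simp: gs_def)
  have gs_below: "gs m j t = 0" if "t \<le> a j" for m j t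
  proof (cases "j \<in> {1..n}")
    case True
    then have "t \<notin> {u j..v j}" using au[OF True] that by auto
    then show ?thesis by (intro gs_zero) auto
  qed (auto simp: gs_def)
  have gs_meas: "gs m j \<in> borel_measurable borel" for m j
  proof (cases "j \<in> {1..n}")
    case True
    show ?thesis by (rule borel_measurable_continuous_onI[OF smooth_continuous[OF gs_sm[OF True]]])
  qed (auto simp: gs_def)
  have gsG': "psi j l * Pf m j l = gs m j l" if "j \<in> {1..n}" for m j l
    using that by (simp add: gs_def)
  have sq2: "(cmod x)\<^sup>2 \<le> 2 * (cmod (x - y))\<^sup>2 + 2 * (cmod y)\<^sup>2" for x y :: complex
  proof -
    have "cmod x \<le> cmod (x - y) + cmod y" by (metis norm_triangle_sub add.commute)
    then have "(cmod x)\<^sup>2 \<le> (cmod (x - y) + cmod y)\<^sup>2" by (intro power_mono) auto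
    also have "\<dots> \<le> 2 * (cmod (x - y))\<^sup>2 + 2 * (cmod y)\<^sup>2"
      using sum_squares_bound[of "cmod (x - y)" "cmod y"] by (simp add: power2_sum)
    finally show ?thesis .
  qed
  have gs_int: "integrable lborel (\<lambda>l. qfun n c a j l * (cmod (gs m j l))\<^sup>2)" if j: "j \<in> {1..n}" for m j
  proof (rule Bochner_Integration.integrable_bound)
    show "integrable lborel (\<lambda>l. 2 * (qfun n c a j l * (cmod (gs m j l - G' j l))\<^sup>2) + 2 * (qfun n c a j l * (cmod (G' j l))\<^sup>2))"
      using Pf_int[OF j, of m] G'i[OF j] by (auto simp: gsG'[OF j])
    show "(\<lambda>l. qfun n c a j l * (cmod (gs m j l))\<^sup>2) \<in> borel_measurable lborel"
      using qfun_meas gs_meas by measurable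
    show "AE l in lborel. norm (qfun n c a j l * (cmod (gs m j l))\<^sup>2) \<le>
        norm (2 * (qfun n c a j l * (cmod (gs m j l - G' j l))\<^sup>2) + 2 * (qfun n c a j l * (cmod (G' j l))\<^sup>2))"
    proof (intro AE_I2)
      fix l
      have q0: "0 \<le> qfun n c a j l" by (rule qnn[OF j])
      have "qfun n c a j l * (cmod (gs m j l))\<^sup>2 \<le> qfun n c a j l * (2 * (cmod (gs m j l - G' j l))\<^sup>2 + 2 * (cmod (G' j l))\<^sup>2)"
        using q0 sq2 by (intro mult_left_mono) auto
      then show "norm (qfun n c a j l * (cmod (gs m j l))\<^sup>2) \<le>
        norm (2 * (qfun n c a j l * (cmod (gs m j l - G' j l))\<^sup>2) + 2 * (qfun n c a j l * (cmod (G' j l))\<^sup>2))"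
        using q0 by (simp add: algebra_simps)
    qed
  qed
  have gsX: "gs m \<in> Xset n c a chi" for m
  proof -
    have L2: "in_L2q n c a (gs m)"
      unfolding in_L2q_def
    proof
      fix k assume k: "k \<in> {1..n}"
      have "set_borel_measurable lborel {a k<..} (gs m k)"
        unfolding set_borel_measurable_def using gs_meas by measurable
      moreover have "set_integrable lborel {a k<..} (\<lambda>lam. qfun n c a k lam * (cmod (gs m k lam))\<^sup>2)"
        unfolding set_integrable_def
      proof -
        have "(\<lambda>lam. indicator {a k<..} lam *\<^sub>R (qfun n c a k lam * (cmod (gs m k lam))\<^sup>2)) =
            (\<lambda>lam. qfun n c a k lam * (cmod (gs m k lam))\<^sup>2)"
        proof
          fix lam show "indicator {a k<..} lam *\<^sub>R (qfun n c a k lam * (cmod (gs m k lam))\<^sup>2) = qfun n c a k lam * (cmod (gs m k lam))\<^sup>2"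
            using gs_below[of lam k m] by (cases "a k < lam") auto
        qed
        then show "integrable lborel (\<lambda>lam. indicator {a k<..} lam *\<^sub>R (qfun n c a k lam * (cmod (gs m k lam))\<^sup>2))"
          using gs_int[OF k] by simp
      qed
      ultimately show "set_borel_measurable lborel {a k<..} (gs m k) \<and>
          set_integrable lborel {a k<..} (\<lambda>lam. qfun n c a k lam * (cmod (gs m k lam))\<^sup>2)" by blast
    qed
    have rest: "C_inf_on {a k..} (gs m k) \<and>
      schwartz (\<lambda>t. if a k \<le> t then complex_of_real (chi t) * gs m k t else 0)" if k: "k \<in> {1..n}" for k
    proof
      show "C_inf_on {a k..} (gs m k)" by (rule smooth_C_inf[OF gs_sm[OF k]])
      have eqf: "(\<lambda>t. if a k \<le> t then complex_of_real (chi t) * gs m k t else 0) = (\<lambda>t. complex_of_real (chi (0 + 1 * t)) * gs m k t)"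
        using gs_below by fastforce
      have "smooth (\<lambda>t. complex_of_real (chi (0 + 1 * t)) * gs m k t)"
        by (intro smooth_mult smooth_chi_affine chi_smooth gs_sm[OF k])
      then show "schwartz (\<lambda>t. if a k \<le> t then complex_of_real (chi t) * gs m k t else 0)"
        unfolding eqf by (rule smooth_schwartz[where u="u k" and v="v k"]) (use gs_zero in auto)
    qed
    show ?thesis unfolding Xset_def using L2 rest by blast
  qed
  define RHS where "RHS = (\<lambda>k x. \<Sum>j\<in>{1..n}. set_lebesgue_integral lborel {a j<..}
              (\<lambda>lam. complex_of_real (qfun n c a j lam) * G j lam
                       * Fminus n c a j (complex_of_real lam) k x))"
  have Zconv: "(\<lambda>m. Zmap n c a (gs m) k x) \<longlonglongrightarrow> RHS k x" if x: "0 < x" for k x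
  proof -
    have each: "(\<lambda>m. set_lebesgue_integral lborel {a j<..}
        (\<lambda>lam. complex_of_real (qfun n c a j lam) * gs m j lam * Fminus n c a j (complex_of_real lam) k x))
      \<longlonglongrightarrow> set_lebesgue_integral lborel {a j<..}
        (\<lambda>lam. complex_of_real (qfun n c a j lam) * G j lam * Fminus n c a j (complex_of_real lam) k x)"
      if j: "j \<in> {1..n}" for j
    proof -
      define F where "F = (\<lambda>lam. Fminus n c a j (complex_of_real lam) k x)"
      define Fb where "Fb = 1 + (\<Sum>l\<in>{1..n}. c l * sqrt ((\<bar>u j\<bar> + \<bar>v j\<bar> + \<bar>a l\<bar>) / c l)) / (c j * sqrt ((u j - a j) / c j))"
      have e1: "set_lebesgue_integral lborel {a j<..}
        (\<lambda>lam. complex_of_real (qfun n c a j lam) * gs m j lam * F lam) =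
        (\<integral>lam. complex_of_real (qfun n c a j lam) * gs m j lam * F lam \<partial>lborel)" for m
      proof -
        have "(\<lambda>lam. indicator {a j<..} lam *\<^sub>R (complex_of_real (qfun n c a j lam) * gs m j lam * F lam)) =
            (\<lambda>lam. complex_of_real (qfun n c a j lam) * gs m j lam * F lam)"
        proof
          fix lam show "indicator {a j<..} lam *\<^sub>R (complex_of_real (qfun n c a j lam) * gs m j lam * F lam) =
              complex_of_real (qfun n c a j lam) * gs m j lam * F lam"
            using gs_below[of lam j m] by (cases "a j < lam") auto
        qed
        then show ?thesis unfolding set_lebesgue_integral_def by simp
      qed
      have e2: "set_lebesgue_integral lborel {a j<..}
        (\<lambda>lam. complex_of_real (qfun n c a j lam) * G j lam * F lam) =
        (\<integral>lam. complex_of_real (qfun n c a j lam) * G' j lam * F lam \<partial>lborel)"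
      proof -
        have "(\<lambda>lam. indicator {a j<..} lam *\<^sub>R (complex_of_real (qfun n c a j lam) * G j lam * F lam)) =
            (\<lambda>lam. complex_of_real (qfun n c a j lam) * G' j lam * F lam)"
          by (rule ext) (simp add: G'_def indicator_def)
        then show ?thesis unfolding set_lebesgue_integral_def by simp
      qed
      have pc: "(\<lambda>m. \<integral>l. complex_of_real (qfun n c a j l) * gs m j l * F l \<partial>lborel) \<longlonglongrightarrow>
         (\<integral>l. complex_of_real (qfun n c a j l) * G' j l * F l \<partial>lborel)"
      proof (rule pairing_conv(3)[where u="u j" and v="v j" and Q="Qb j" and Fb=Fb])
        show "qfun n c a j \<in> borel_measurable borel" by (rule qfun_meas)
        show "\<And>l. 0 \<le> qfun n c a j l" by (rule qnn[OF j])
        show "\<And>l. l \<in> {u j..v j} \<Longrightarrow> qfun n c a j l \<le> Qb j" by (rule qb[OF j])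
        show "F \<in> borel_measurable borel" unfolding F_def by (rule Fminus_meas)
        show "\<And>l. l \<in> {u j..v j} \<Longrightarrow> cmod (F l) \<le> Fb"
          unfolding F_def Fb_def by (rule Fminus_bound[of n c j a "u j", OF cpos j au[OF j]]) (use x in auto)
        show "G' j \<in> borel_measurable borel" by (rule G'm[OF j])
        show "\<And>m. gs m j \<in> borel_measurable borel" by (rule gs_meas)
        show "AE l in lborel. l \<notin> {u j..v j} \<longrightarrow> G' j l = 0"
          using Gsupp[OF j] by eventually_elim (use uu0[OF j] v0v[of j] in auto)
        show "\<And>m l. l \<notin> {u j..v j} \<Longrightarrow> gs m j l = 0" by (rule gs_zero) auto
        show "integrable lborel (\<lambda>l. qfun n c a j l * (cmod (G' j l))\<^sup>2)" by (rule G'i[OF j])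
        show "\<And>m. integrable lborel (\<lambda>l. qfun n c a j l * (cmod (gs m j l - G' j l))\<^sup>2)"
          using Pf_int[OF j] by (simp add: gsG'[OF j])
        show "\<And>m. (\<integral>l. qfun n c a j l * (cmod (gs m j l - G' j l))\<^sup>2 \<partial>lborel) < 1 / real (Suc m)"
          using Pf_less[OF j] by (simp add: gsG'[OF j])
        show "u j \<le> v j" using uv[OF j] by simp
      qed
      show ?thesis unfolding e1[unfolded F_def] e2[unfolded F_def] using pc unfolding F_def .
    qed
    have "(\<lambda>m. \<Sum>j\<in>{1..n}. set_lebesgue_integral lborel {a j<..}
        (\<lambda>lam. complex_of_real (qfun n c a j lam) * gs m j lam * Fminus n c a j (complex_of_real lam) k x))
      \<longlonglongrightarrow> RHS k x"
      unfolding RHS_def by (intro tendsto_sum each) auto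
    then show ?thesis by (simp add: Zmap_def)
  qed
  have TH: "\<And>H. in_L2q n c a H \<Longrightarrow> in_H n (T H)"
    and Tlin: "\<And>H H' \<alpha> \<beta>. in_L2q n c a H \<Longrightarrow> in_L2q n c a H' \<Longrightarrow>
        ae_eq_N n (T (\<lambda>j t. \<alpha> * H j t + \<beta> * H' j t)) (\<lambda>k x. \<alpha> * T H k x + \<beta> * T H' k x)"
    and TX: "\<And>H. H \<in> Xset n c a chi \<Longrightarrow> ae_eq_N n (T H) (Zmap n c a H)"
    using T unfolding is_Ztilde_def by blast+
  obtain C where Tbd: "\<And>H. in_L2q n c a H \<Longrightarrow> norm_H n (T H) \<le> C * norm_L2q n c a H"
    using T unfolding is_Ztilde_def by blast
  define Dm where "Dm = (\<lambda>m j t. 1 * G j t + (- 1) * gs m j t)"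
  have gsL2: "in_L2q n c a (gs m)" for m using gsX[of m] by (simp add: Xset_def)
  have Deq: "indicator {a k<..} l *\<^sub>R (qfun n c a k l * (cmod (Dm m k l))\<^sup>2) =
      qfun n c a k l * (cmod (gs m k l - G' k l))\<^sup>2" for m k l
    using gs_below[of l k m] by (cases "a k < l") (auto simp: Dm_def G'_def norm_minus_commute)
  have DL2: "in_L2q n c a (Dm m)" for m
    unfolding in_L2q_def
  proof
    fix k assume k: "k \<in> {1..n}"
    have "(\<lambda>l. indicator {a k<..} l *\<^sub>R Dm m k l) = (\<lambda>l. G' k l - indicator {a k<..} l *\<^sub>R gs m k l)"
      by (rule ext) (simp add: Dm_def G'_def algebra_simps)
    moreover have "(\<lambda>l. G' k l - indicator {a k<..} l *\<^sub>R gs m k l) \<in> borel_measurable lborel"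
      using G'm[OF k] gs_meas[of m k] by measurable
    ultimately have "set_borel_measurable lborel {a k<..} (Dm m k)"
      unfolding set_borel_measurable_def by simp
    moreover have "set_integrable lborel {a k<..} (\<lambda>lam. qfun n c a k lam * (cmod (Dm m k lam))\<^sup>2)"
      unfolding set_integrable_def Deq using Pf_int[OF k, of m] by (simp add: gsG'[OF k])
    ultimately show "set_borel_measurable lborel {a k<..} (Dm m k) \<and>
        set_integrable lborel {a k<..} (\<lambda>lam. qfun n c a k lam * (cmod (Dm m k lam))\<^sup>2)" by blast
  qed
  have Dnorm: "norm_L2q n c a (Dm m) \<le> sqrt (real n / real (Suc m))" for m
  proof -
    have "(\<Sum>k\<in>{1..n}. set_lebesgue_integral lborel {a k<..} (\<lambda>lam. qfun n c a k lam * (cmod (Dm m k lam))\<^sup>2))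
        \<le> (\<Sum>k\<in>{1..n}. 1 / real (Suc m))"
    proof (rule sum_mono)
      fix k assume k: "k \<in> {1..n}"
      have "set_lebesgue_integral lborel {a k<..} (\<lambda>lam. qfun n c a k lam * (cmod (Dm m k lam))\<^sup>2)
          = (\<integral>l. qfun n c a k l * (cmod (psi k l * Pf m k l - G' k l))\<^sup>2 \<partial>lborel)"
        unfolding set_lebesgue_integral_def Deq by (simp add: gsG'[OF k])
      then show "set_lebesgue_integral lborel {a k<..} (\<lambda>lam. qfun n c a k lam * (cmod (Dm m k lam))\<^sup>2) \<le> 1 / real (Suc m)"
        using Pf_less[OF k, of m] by simp
    qed
    also have "\<dots> = real n / real (Suc m)" by simp
    finally show ?thesis unfolding norm_L2q_def by (rule real_sqrt_le_mono)
  qed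
  have Hbound: "set_lebesgue_integral lborel {0<..} (\<lambda>x. (cmod (T (Dm m) k x))\<^sup>2) \<le> C\<^sup>2 * (real n / real (Suc m))"
    if k: "k \<in> {1..n}" for m k
  proof -
    have H: "in_H n (T (Dm m))" by (rule TH[OF DL2])
    have nn: "\<And>k. 0 \<le> set_lebesgue_integral lborel {0<..} (\<lambda>x. (cmod (T (Dm m) k x))\<^sup>2)"
      unfolding set_lebesgue_integral_def by (intro integral_nonneg_AE AE_I2) (simp add: indicator_def)
    have "set_lebesgue_integral lborel {0<..} (\<lambda>x. (cmod (T (Dm m) k x))\<^sup>2)
        \<le> (\<Sum>k\<in>{1..n}. set_lebesgue_integral lborel {0<..} (\<lambda>x. (cmod (T (Dm m) k x))\<^sup>2))"
      using k nn by (intro member_le_sum) auto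
    also have sumnn: "0 \<le> (\<Sum>k\<in>{1..n}. set_lebesgue_integral lborel {0<..} (\<lambda>x. (cmod (T (Dm m) k x))\<^sup>2))"
      by (rule sum_nonneg) (rule nn)
    have "(\<Sum>k\<in>{1..n}. set_lebesgue_integral lborel {0<..} (\<lambda>x. (cmod (T (Dm m) k x))\<^sup>2)) = (norm_H n (T (Dm m)))\<^sup>2"
      unfolding norm_H_def by (rule real_sqrt_pow2[symmetric, OF sumnn])
    finally have step1: "set_lebesgue_integral lborel {0<..} (\<lambda>x. (cmod (T (Dm m) k x))\<^sup>2) \<le> (norm_H n (T (Dm m)))\<^sup>2" .
    have "(norm_H n (T (Dm m)))\<^sup>2 \<le> (C * norm_L2q n c a (Dm m))\<^sup>2"
    proof (rule power_mono)
      show "norm_H n (T (Dm m)) \<le> C * norm_L2q n c a (Dm m)" by (rule Tbd[OF DL2])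
      show "0 \<le> norm_H n (T (Dm m))" unfolding norm_H_def using sumnn by simp
    qed
    with step1 have "set_lebesgue_integral lborel {0<..} (\<lambda>x. (cmod (T (Dm m) k x))\<^sup>2) \<le> (C * norm_L2q n c a (Dm m))\<^sup>2"
      by linarith
    also have "\<dots> = C\<^sup>2 * (norm_L2q n c a (Dm m))\<^sup>2" by (simp add: power_mult_distrib)
    also have "\<dots> \<le> C\<^sup>2 * (sqrt (real n / real (Suc m)))\<^sup>2"
    proof -
      have "0 \<le> (\<Sum>k\<in>{1..n}. set_lebesgue_integral lborel {a k<..} (\<lambda>lam. qfun n c a k lam * (cmod (Dm m k lam))\<^sup>2))"
      proof (rule sum_nonneg)
        fix k assume k: "k \<in> {1..n}"
        show "0 \<le> set_lebesgue_integral lborel {a k<..} (\<lambda>lam. qfun n c a k lam * (cmod (Dm m k lam))\<^sup>2)"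
          unfolding set_lebesgue_integral_def using qnn[OF k]
          by (intro integral_nonneg_AE AE_I2) (simp add: indicator_def)
      qed
      then have "0 \<le> norm_L2q n c a (Dm m)" unfolding norm_L2q_def by simp
      then show ?thesis using Dnorm[of m] by (intro mult_left_mono power_mono) auto
    qed
    also have "\<dots> = C\<^sup>2 * (real n / real (Suc m))" by simp
    finally show ?thesis .
  qed
  have final: "\<forall>k\<in>{1..n}. AE x in lborel. 0 < x \<longrightarrow> T G k x = RHS k x"
  proof
    fix k assume k: "k \<in> {1..n}"
    have ae1: "AE x in lborel. \<forall>m. 0 < x \<longrightarrow> T (Dm m) k x = 1 * T G k x + (- 1) * T (gs m) k x"
      unfolding AE_all_countable
    proof
      fix m show "AE x in lborel. 0 < x \<longrightarrow> T (Dm m) k x = 1 * T G k x + (- 1) * T (gs m) k x"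
        using Tlin[OF GL2 gsL2[of m], of 1 "-1"] k unfolding ae_eq_N_def Dm_def by blast
    qed
    have ae2: "AE x in lborel. \<forall>m. 0 < x \<longrightarrow> T (gs m) k x = Zmap n c a (gs m) k x"
      unfolding AE_all_countable
    proof
      fix m show "AE x in lborel. 0 < x \<longrightarrow> T (gs m) k x = Zmap n c a (gs m) k x"
        using TX[OF gsX[of m]] k unfolding ae_eq_N_def by blast
    qed
    define phi where "phi = (\<lambda>m x. ennreal ((cmod (indicator {0<..} x *\<^sub>R T (Dm m) k x))\<^sup>2))"
    have phim: "phi m \<in> borel_measurable lborel" for m
    proof -
      have "set_borel_measurable lborel {0<..} (T (Dm m) k)"
        using TH[OF DL2[of m]] k unfolding in_H_def by blast
      then show ?thesis unfolding phi_def set_borel_measurable_def by measurable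
    qed
    have phiint: "integral\<^sup>N lborel (phi m) \<le> ennreal (C\<^sup>2 * (real n / real (Suc m)))" for m
    proof -
      have "set_integrable lborel {0<..} (\<lambda>x. (cmod (T (Dm m) k x))\<^sup>2)"
        using TH[OF DL2[of m]] k unfolding in_H_def by blast
      have int: "integrable lborel (\<lambda>x. (cmod (indicator {0<..} x *\<^sub>R T (Dm m) k x))\<^sup>2)"
      proof -
        have "(\<lambda>x. (cmod (indicator {0<..} x *\<^sub>R T (Dm m) k x))\<^sup>2) = (\<lambda>x. indicator {0<..} x *\<^sub>R (cmod (T (Dm m) k x))\<^sup>2)"
          by (rule ext) (simp add: indicator_def)
        then show ?thesis using \<open>set_integrable lborel {0<..} (\<lambda>x. (cmod (T (Dm m) k x))\<^sup>2)\<close>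
          unfolding set_integrable_def by simp
      qed
      have "integral\<^sup>N lborel (phi m) = ennreal (\<integral>x. (cmod (indicator {0<..} x *\<^sub>R T (Dm m) k x))\<^sup>2 \<partial>lborel)"
        unfolding phi_def by (rule nn_integral_eq_integral[OF int]) simp
      also have "(\<integral>x. (cmod (indicator {0<..} x *\<^sub>R T (Dm m) k x))\<^sup>2 \<partial>lborel) =
          set_lebesgue_integral lborel {0<..} (\<lambda>x. (cmod (T (Dm m) k x))\<^sup>2)"
        unfolding set_lebesgue_integral_def by (intro Bochner_Integration.integral_cong) (auto simp: indicator_def)
      finally show ?thesis using Hbound[OF k, of m] by (simp add: ennreal_leI)
    qed
    have "(\<lambda>m. C\<^sup>2 * (real n * inverse (real (Suc m)))) \<longlonglongrightarrow> C\<^sup>2 * (real n * 0)"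
      by (intro tendsto_intros LIMSEQ_inverse_real_of_nat)
    then have "(\<lambda>m. C\<^sup>2 * (real n / real (Suc m))) \<longlonglongrightarrow> 0" by (simp add: divide_inverse)
    then have "(\<lambda>m. ennreal (C\<^sup>2 * (real n / real (Suc m)))) \<longlonglongrightarrow> ennreal 0"
      by (rule tendsto_ennrealI)
    then have lim0: "liminf (\<lambda>m. ennreal (C\<^sup>2 * (real n / real (Suc m)))) = 0"
      by (simp add: lim_imp_Liminf)
    have "(\<integral>\<^sup>+ x. liminf (\<lambda>m. phi m x) \<partial>lborel) \<le> liminf (\<lambda>m. integral\<^sup>N lborel (phi m))"
      by (rule nn_integral_liminf[OF phim])
    also have "\<dots> \<le> liminf (\<lambda>m. ennreal (C\<^sup>2 * (real n / real (Suc m))))"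
      by (intro Liminf_mono always_eventually allI phiint)
    finally have "(\<integral>\<^sup>+ x. liminf (\<lambda>m. phi m x) \<partial>lborel) = 0" using lim0 by simp
    then have aeL: "AE x in lborel. liminf (\<lambda>m. phi m x) = 0"
      by (subst (asm) nn_integral_0_iff_AE) (use phim in measurable)
    show "AE x in lborel. 0 < x \<longrightarrow> T G k x = RHS k x"
      using ae1 ae2 aeL
    proof eventually_elim
      case (elim x)
      show ?case
      proof
        assume x: "0 < x"
        have "phi m x = ennreal ((cmod (T G k x - Zmap n c a (gs m) k x))\<^sup>2)" for m
          using elim x by (simp add: phi_def)
        moreover have "(\<lambda>m. ennreal ((cmod (T G k x - Zmap n c a (gs m) k x))\<^sup>2)) \<longlonglongrightarrow>
            ennreal ((cmod (T G k x - RHS k x))\<^sup>2)"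
          by (intro tendsto_ennrealI tendsto_intros Zconv[OF x])
        ultimately have "liminf (\<lambda>m. phi m x) = ennreal ((cmod (T G k x - RHS k x))\<^sup>2)"
          by (simp add: lim_imp_Liminf)
        then have "ennreal ((cmod (T G k x - RHS k x))\<^sup>2) = 0" using elim by simp
        then show "T G k x = RHS k x" by simp
      qed
    qed
  qed
  then show ?thesis unfolding RHS_def .
qed


end
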